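(* Let $g\in W(\mathsf D_n)$, written as a product $g=\beta_1\cdots\beta_R$ of disjoint signed permutation cycles, and let $\Lambda$ be the number of $i$ with $\sigma(\beta_i)=-1$. Let $\langle g\rangle$ act on $\mathrm{Pic}(\bar X)=\bigoplus_{i=-1}^n\mathbb Z l_i$ via $\Phi$. Then $$\mathrm H^1(\langle g\rangle,\mathrm{Pic}(\bar X))=\begin{cases}0,&\Lambda=0\text{ or }\Lambda=2,\\ (\mathbb Z/2)^{\Lambda-2},&\text{otherwise.}\end{cases}$$
   Context: $W(\mathsf B_n)$ is the group of signed permutations of the symbols $j^\pm$ ($j=1,\dots,n$), generated by $\mathfrak S_n$ and involutions $c_j$ exchanging $j^+,j^-$; each element is $c_{j_1}\cdots c_{j_t}\tau$ with distinct $j_i$, $\tau\in\mathfrak S_n$; $\sigma(c_{j_1}\cdots c_{j_t}\tau)=(-1)^t$, $W(\mathsf D_n)=\ker\sigma$. Decomposing $\tau$ into disjoint cycles $\gamma$ (including fixed points), the signed permutation cycles of $g$ are $\beta_\gamma=(\prod_{j_i\in\mathrm{supp}\,\gamma}c_{j_i})\gamma$, and $\sigma(\beta_\gamma)=(-1)^{\#\{j_i\in\mathrm{supp}\,\gamma\}}$. $\mathrm{Pic}(\bar X)$ is the geometric Picard lattice of a standard conic bundle over $\mathbb P^1$ with $n$ degenerate fibers, with basis $l_{-1},l_0,l_1,\dots,l_n$ ($l_0$ the fiber class, $l_j$ a component of the $j$-th degenerate fiber). For $g=c_{j_1}\cdots c_{j_t}\tau$ with $t$ even, let $s(i)=-1$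 if $i\in\{j_1,\dots,j_t\}$, else $1$; then $\Phi(g)l_0=l_0$, $\Phi(g)l_{-1}=l_{-1}+\frac t2l_0-\sum_{s(i)=-1}l_i$, and for $v\ge1$, $u=\tau^{-1}(v)$: $\Phi(g)l_v=l_u$ if $s(u)=1$, $\Phi(g)l_v=l_0-l_u$ if $s(u)=-1$. *)

theory Defs
  imports Main "HOL-Algebra.Algebra"
begin

text \<open>An element g = c_{j_1} ... c_{j_t} tau of W(B_n) is encoded by the pair (tau, S)
  with tau a permutation of {1..n} and S = {j_1,...,j_t} a subset of {1..n}.
  g lies in W(D_n) iff card S is even.\<close>

definition in_WD :: "nat \<Rightarrow> (nat \<Rightarrow> nat) \<Rightarrow> nat set \<Rightarrow> bool" where
  "in_WD n \<tau> S \<longleftrightarrow> \<tau> permutes {1..n} \<and> S \<subseteq> {1..n} \<and> even (card S)"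

definition tau_cycles :: "nat \<Rightarrow> (nat \<Rightarrow> nat) \<Rightarrow> nat set set" where
  "tau_cycles n \<tau> = (\<lambda>i. {(\<tau> ^^ k) i | k. True}) ` {1..n}"

text \<open>Lambda: the number of signed permutation cycles beta_gamma with sigma(beta_gamma) = -1.\<close>
definition Lambda :: "nat \<Rightarrow> (nat \<Rightarrow> nat) \<Rightarrow> nat set \<Rightarrow> nat" where
  "Lambda n \<tau> S = card {\<gamma> \<in> tau_cycles n \<tau>. odd (card (S \<inter> \<gamma>))}"

text \<open>The lattice Pic(X) = direct sum of Z l_i, i = -1..n, as integer vectors indexed by int.\<close>
definition pic :: "nat \<Rightarrow> (int \<Rightarrow> int) set" where
  "pic n = {x. \<forall>i. i \<notin> {-1..int n} \<longrightarrow> x i = 0}"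

definition basis_l :: "int \<Rightarrow> (int \<Rightarrow> int)" where
  "basis_l i = (\<lambda>j. if j = i then 1 else 0)"

definition Phi_basis :: "nat \<Rightarrow> (nat \<Rightarrow> nat) \<Rightarrow> nat set \<Rightarrow> int \<Rightarrow> (int \<Rightarrow> int)" where
  "Phi_basis n \<tau> S i =
    (if i = -1 then
       (\<lambda>j. basis_l (-1) j + int (card S div 2) * basis_l 0 j - (\<Sum>s\<in>S. basis_l (int s) j))
     else if i = 0 then basis_l 0
     else (let u = inv_into {1..n} \<tau> (nat i) in
           if u \<in> S then (\<lambda>j. basis_l 0 j - basis_l (int u) j) else basis_l (int u)))"

definition Phi :: "nat \<Rightarrow> (nat \<Rightarrow> nat) \<Rightarrow> nat set \<Rightarrow> (int \<Rightarrow> int) \<Rightarrow> (int \<Rightarrow> int)" where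
  "Phi n \<tau> S x = (\<lambda>j. \<Sum>i\<in>{-1..int n}. x i * Phi_basis n \<tau> S i j)"

text \<open>The cyclic group <g>, realised through its (faithful) action on Pic(X): the set of
  powers of Phi(g).\<close>
definition cyc :: "nat \<Rightarrow> (nat \<Rightarrow> nat) \<Rightarrow> nat set \<Rightarrow> ((int \<Rightarrow> int) \<Rightarrow> (int \<Rightarrow> int)) set" where
  "cyc n \<tau> S = {Phi n \<tau> S ^^ k | k. True}"

definition cocycles :: "nat \<Rightarrow> ((int \<Rightarrow> int) \<Rightarrow> (int \<Rightarrow> int)) set
     \<Rightarrow> (((int \<Rightarrow> int) \<Rightarrow> (int \<Rightarrow> int)) \<Rightarrow> (int \<Rightarrow> int)) set" where
  "cocycles n G = {f \<in> G \<rightarrow>\<^sub>E pic n. \<forall>a\<in>G. \<forall>b\<in>G. f (a \<circ> b) = (\<lambda>j. f a j + a (f b) j)}"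

definition coboundaries :: "nat \<Rightarrow> ((int \<Rightarrow> int) \<Rightarrow> (int \<Rightarrow> int)) set
     \<Rightarrow> (((int \<Rightarrow> int) \<Rightarrow> (int \<Rightarrow> int)) \<Rightarrow> (int \<Rightarrow> int)) set" where
  "coboundaries n G = {(\<lambda>a\<in>G. (\<lambda>j. a m j - m j)) | m. m \<in> pic n}"

definition cocycle_group :: "nat \<Rightarrow> ((int \<Rightarrow> int) \<Rightarrow> (int \<Rightarrow> int)) set
     \<Rightarrow> (((int \<Rightarrow> int) \<Rightarrow> (int \<Rightarrow> int)) \<Rightarrow> (int \<Rightarrow> int)) monoid" where
  "cocycle_group n G = \<lparr>carrier = cocycles n G,
                         monoid.mult = (\<lambda>f h. \<lambda>a\<in>G. (\<lambda>j. f a j + h a j)),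
                         one = (\<lambda>a\<in>G. (\<lambda>j. 0))\<rparr>"

definition H1 :: "nat \<Rightarrow> ((int \<Rightarrow> int) \<Rightarrow> (int \<Rightarrow> int)) set
     \<Rightarrow> ((((int \<Rightarrow> int) \<Rightarrow> (int \<Rightarrow> int)) \<Rightarrow> (int \<Rightarrow> int)) set) monoid" where
  "H1 n G = cocycle_group n G Mod coboundaries n G"

end

theory Submission
  imports Defs "HOL-Combinatorics.Permutations"
begin
locale wd =
  fixes n :: nat and \<tau> :: "nat \<Rightarrow> nat" and S :: "nat set"
  assumes wd: "in_WD n \<tau> S"
begin

abbreviation P where "P \<equiv> Phi n \<tau> S"

definition eps :: "nat \<Rightarrow> int" where "eps u = (if u \<in> S then -1 else 1)"

lemma perm: "\<tau> permutes {1..n}" and Ssub: "S \<subseteq> {1..n}" and Seven: "even (card S)"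
  using wd by (auto simp: in_WD_def)

lemma tau_in: "u \<in> {1..n} \<Longrightarrow> \<tau> u \<in> {1..n}"
  using permutes_in_image[OF perm] by blast

lemma tau_inj: "inj \<tau>"
  using perm permutes_inj by blast

lemma tau_image: "\<tau> ` {1..n} = {1..n}"
  using perm permutes_image by blast

lemma finS: "finite S" using Ssub finite_subset by blast

lemma sum_tau: "(\<Sum>v\<in>{1..n}. F v) = (\<Sum>u\<in>{1..n}. F (\<tau> u))"
  using sum.permute[OF perm, of F] by (simp add: comp_def)

lemma prod_tau: "(\<Prod>v\<in>{1..n}. F v) = (\<Prod>u\<in>{1..n}. F (\<tau> u))"
  using prod.permute[OF perm, of F] by (simp add: comp_def)

definition Q :: "nat \<Rightarrow> int \<Rightarrow> int" where
  "Q u j = (if u \<in> S then basis_l 0 j - basis_l (int u) j else basis_l (int u) j)"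

lemma Pb_tau: "u \<in> {1..n} \<Longrightarrow> Phi_basis n \<tau> S (int (\<tau> u)) = Q u"
proof -
  assume u: "u \<in> {1..n}"
  have t: "\<tau> u \<in> {1..n}" using tau_in[OF u] .
  have iv: "inv_into {1..n} \<tau> (\<tau> u) = u"
    using u tau_inj by (meson inj_on_subset inv_into_f_f subset_UNIV)
  show ?thesis using t iv unfolding Phi_basis_def Q_def by (auto simp: Let_def fun_eq_iff)
qed

lemma Phi_split: "Phi n \<tau> S x j = x (-1) * Phi_basis n \<tau> S (-1) j + x 0 * basis_l 0 j
    + (\<Sum>u\<in>{1..n}. x (int (\<tau> u)) * Q u j)"
proof -
  have dom: "{-1..int n} = insert (-1) (insert 0 (int ` {1..n}))"
  proof -
    have "i \<in> insert (-1) (insert 0 (int ` {1..n}))" if i: "i \<in> {-1..int n}" for i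
    proof (cases "i = -1 \<or> i = 0")
      case False
      then have "nat i \<in> {1..n}" "i = int (nat i)" using i by auto
      then show ?thesis by blast
    qed auto
    then show ?thesis by (auto; blast)
  qed
  have "(\<Sum>i\<in>int ` {1..n}. x i * Phi_basis n \<tau> S i j) = (\<Sum>v\<in>{1..n}. x (int v) * Phi_basis n \<tau> S (int v) j)"
    by (simp add: sum.reindex)
  also have "\<dots> = (\<Sum>u\<in>{1..n}. x (int (\<tau> u)) * Phi_basis n \<tau> S (int (\<tau> u)) j)"
    by (rule sum_tau)
  also have "\<dots> = (\<Sum>u\<in>{1..n}. x (int (\<tau> u)) * Q u j)"
    by (rule sum.cong) (auto simp: Pb_tau)
  finally have e: "(\<Sum>i\<in>int ` {1..n}. x i * Phi_basis n \<tau> S i j) = (\<Sum>u\<in>{1..n}. x (int (\<tau> u)) * Q u j)" .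
  have n1: "-1 \<notin> insert 0 (int ` {1..n})" and n0: "(0::int) \<notin> int ` {1..n}" by auto
  have fin: "finite (int ` {1..n})" by simp
  have "Phi n \<tau> S x j = (\<Sum>i\<in>insert (-1) (insert 0 (int ` {1..n})). x i * Phi_basis n \<tau> S i j)"
    unfolding Phi_def dom ..
  also have "\<dots> = x (-1) * Phi_basis n \<tau> S (-1) j + (x 0 * Phi_basis n \<tau> S 0 j +
      (\<Sum>i\<in>int ` {1..n}. x i * Phi_basis n \<tau> S i j))"
    by (subst sum.insert[OF _ n1], simp add: fin, subst sum.insert[OF fin n0], rule refl)
  also have "Phi_basis n \<tau> S 0 = basis_l 0" unfolding Phi_basis_def by simp
  finally show ?thesis unfolding e by simp
qed

lemma coord_m1: "Phi n \<tau> S x (-1) = x (-1)"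
proof -
  have "Q u (-1) = 0" for u unfolding Q_def basis_l_def by auto
  then show ?thesis by (simp add: Phi_split Phi_basis_def basis_l_def)
qed

lemma sum_S_basis: "j \<notin> int ` S \<Longrightarrow> (\<Sum>s\<in>S. basis_l (int s) j) = 0"
  by (rule sum.neutral) (auto simp: basis_l_def)

lemma sum_S_basis2: "u \<in> S \<Longrightarrow> (\<Sum>s\<in>S. basis_l (int s) (int u)) = 1"
proof -
  assume u: "u \<in> S"
  have "(\<Sum>s\<in>S. basis_l (int s) (int u)) = (\<Sum>s\<in>S. if s = u then 1 else 0)"
    by (rule sum.cong) (auto simp: basis_l_def)
  also have "\<dots> = 1" using u finS by simp
  finally show ?thesis .
qed

lemma coord_0: "Phi n \<tau> S x 0 = x (-1) * int (card S div 2) + x 0 + (\<Sum>u\<in>S. x (int (\<tau> u)))"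
proof -
  have a: "(\<Sum>s\<in>S. basis_l (int s) 0) = 0"
    by (rule sum_S_basis) (use Ssub in auto)
  have "(\<Sum>u\<in>{1..n}. x (int (\<tau> u)) * Q u 0) = (\<Sum>u\<in>{1..n}. if u \<in> S then x (int (\<tau> u)) else 0)"
    by (rule sum.cong) (auto simp: Q_def basis_l_def)
  also have "\<dots> = (\<Sum>u\<in>S. x (int (\<tau> u)))"
    using Ssub by (simp add: sum.If_cases Int_absorb1)
  finally show ?thesis
    by (simp add: Phi_split Phi_basis_def a) (simp add: basis_l_def)
qed

lemma coord_pos: "u0 \<in> {1..n} \<Longrightarrow>
   Phi n \<tau> S x (int u0) = - x (-1) * (if u0 \<in> S then 1 else 0) + eps u0 * x (int (\<tau> u0))"
proof -
  assume u0: "u0 \<in> {1..n}"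
  have "(\<Sum>u\<in>{1..n}. x (int (\<tau> u)) * Q u (int u0)) = (\<Sum>u\<in>{1..n}. if u = u0 then eps u0 * x (int (\<tau> u0)) else 0)"
    by (rule sum.cong) (use u0 in \<open>auto simp: Q_def basis_l_def eps_def\<close>)
  also have "\<dots> = eps u0 * x (int (\<tau> u0))" using u0 by (subst sum.delta) auto
  finally have e: "(\<Sum>u\<in>{1..n}. x (int (\<tau> u)) * Q u (int u0)) = eps u0 * x (int (\<tau> u0))" .
  have b: "(\<Sum>s\<in>S. basis_l (int s) (int u0)) = (if u0 \<in> S then 1 else 0)"
    using sum_S_basis2[of u0] sum_S_basis[of "int u0"] by (auto simp: image_iff)
  show ?thesis using u0 unfolding Phi_split e by (simp add: Phi_basis_def b) (simp add: basis_l_def)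
qed

lemma coord_out: "j \<notin> {-1..int n} \<Longrightarrow> Phi n \<tau> S x j = 0"
proof -
  assume j: "j \<notin> {-1..int n}"
  have "Q u j = 0" if "u \<in> {1..n}" for u using that j unfolding Q_def basis_l_def by auto
  moreover have "(\<Sum>s\<in>S. basis_l (int s) j) = 0"
    by (rule sum_S_basis) (use j Ssub in auto)
  moreover have "j \<noteq> -1" "j \<noteq> 0" using j by auto
  ultimately show ?thesis by (simp add: Phi_split Phi_basis_def basis_l_def)
qed

lemma Phi_sum: "finite I \<Longrightarrow> Phi n \<tau> S (\<lambda>j. \<Sum>i\<in>I. f i j) = (\<lambda>j. \<Sum>i\<in>I. Phi n \<tau> S (f i) j)"
  unfolding Phi_def sum_distrib_right by (rule ext, rule sum.swap)

lemma Phi_add: "Phi n \<tau> S (\<lambda>j. x j + y j) = (\<lambda>j. Phi n \<tau> S x j + Phi n \<tau> S y j)"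
  unfolding Phi_def by (auto simp: fun_eq_iff distrib_right sum.distrib)

lemma Phi_diff: "Phi n \<tau> S (\<lambda>j. x j - y j) = (\<lambda>j. Phi n \<tau> S x j - Phi n \<tau> S y j)"
  unfolding Phi_def by (auto simp: fun_eq_iff left_diff_distrib sum_subtractf)

lemma Phi_smult: "Phi n \<tau> S (\<lambda>j. c * x j) = (\<lambda>j. c * Phi n \<tau> S x j)"
  unfolding Phi_def by (auto simp: fun_eq_iff sum_distrib_left mult.assoc)

lemma Phi_zero: "Phi n \<tau> S (\<lambda>j. 0) = (\<lambda>j. 0)"
  unfolding Phi_def by auto

lemma Phi_pic: "Phi n \<tau> S x \<in> pic n"
  unfolding pic_def using coord_out by auto

lemma pow_add: "(P ^^ k) (\<lambda>j. x j + y j) = (\<lambda>j. (P ^^ k) x j + (P ^^ k) y j)"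
  by (induction k) (auto simp: Phi_add)

lemma pow_diff: "(P ^^ k) (\<lambda>j. x j - y j) = (\<lambda>j. (P ^^ k) x j - (P ^^ k) y j)"
  by (induction k) (auto simp: Phi_diff)

lemma pow_smult: "(P ^^ k) (\<lambda>j. c * x j) = (\<lambda>j. c * (P ^^ k) x j)"
  by (induction k) (auto simp: Phi_smult)

lemma pow_zero: "(P ^^ k) (\<lambda>j. 0) = (\<lambda>j. 0)"
  by (induction k) (auto simp: Phi_zero)

lemma pow_sum: "finite I \<Longrightarrow> (P ^^ k) (\<lambda>j. \<Sum>i\<in>I. f i j) = (\<lambda>j. \<Sum>i\<in>I. (P ^^ k) (f i) j)"
  by (induction k) (auto simp: Phi_sum)

lemma pow_pic: "x \<in> pic n \<Longrightarrow> (P ^^ k) x \<in> pic n"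
  by (cases k) (auto simp: Phi_pic)

lemma Phi_basis_eq: "i \<in> {-1..int n} \<Longrightarrow> Phi n \<tau> S (basis_l i) = Phi_basis n \<tau> S i"
proof -
  assume i: "i \<in> {-1..int n}"
  have "Phi n \<tau> S (basis_l i) j = Phi_basis n \<tau> S i j" for j
  proof -
    have "Phi n \<tau> S (basis_l i) j = (\<Sum>i'\<in>{-1..int n}. if i' = i then Phi_basis n \<tau> S i j else 0)"
      unfolding Phi_def by (rule sum.cong) (auto simp: basis_l_def)
    also have "\<dots> = Phi_basis n \<tau> S i j" using i by (subst sum.delta) auto
    finally show ?thesis .
  qed
  then show ?thesis by auto
qed

lemma pic_expand: "x \<in> pic n \<Longrightarrow> x = (\<lambda>j. \<Sum>i\<in>{-1..int n}. x i * basis_l i j)"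
proof -
  assume x: "x \<in> pic n"
  have "x j = (\<Sum>i\<in>{-1..int n}. x i * basis_l i j)" for j
  proof (cases "j \<in> {-1..int n}")
    case True
    have "(\<Sum>i\<in>{-1..int n}. x i * basis_l i j) = (\<Sum>i\<in>{-1..int n}. if i = j then x j else 0)"
      by (rule sum.cong) (auto simp: basis_l_def)
    also have "\<dots> = x j" using True by (subst sum.delta) auto
    finally show ?thesis by simp
  next
    case False
    then show ?thesis using x by (auto simp: pic_def basis_l_def intro!: sum.neutral)
  qed
  then show ?thesis by (rule ext)
qed

lemma pow_basis_det: "x \<in> pic n \<Longrightarrow> (\<forall>i\<in>{-1..int n}. (P ^^ a) (basis_l i) = (P ^^ b) (basis_l i))
   \<Longrightarrow> (P ^^ a) x = (P ^^ b) x"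
proof -
  assume x: "x \<in> pic n" and h: "\<forall>i\<in>{-1..int n}. (P ^^ a) (basis_l i) = (P ^^ b) (basis_l i)"
  have "(P ^^ a) x = (\<lambda>j. \<Sum>i\<in>{-1..int n}. (P ^^ a) (\<lambda>j. x i * basis_l i j) j)"
    by (subst pic_expand[OF x], subst pow_sum) auto
  also have "\<dots> = (\<lambda>j. \<Sum>i\<in>{-1..int n}. (P ^^ b) (\<lambda>j. x i * basis_l i j) j)"
    using h by (auto simp: pow_smult intro!: sum.cong)
  also have "\<dots> = (P ^^ b) x"
    by (subst (2) pic_expand[OF x], subst pow_sum) auto
  finally show ?thesis .
qed

end

context wd begin

definition Fset :: "(int \<Rightarrow> int) set" where
  "Fset = (\<lambda>u. basis_l (int u)) ` {1..n} \<union> (\<lambda>u. (\<lambda>j. basis_l 0 j - basis_l (int u) j)) ` {1..n}"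

lemma Fset_fin: "finite Fset" unfolding Fset_def by simp

lemma P_l0: "P (basis_l 0) = basis_l 0"
  by (subst Phi_basis_eq) (auto simp: Phi_basis_def)

lemma pow_l0: "(P ^^ k) (basis_l 0) = basis_l 0"
  by (induction k) (auto simp: P_l0)

lemma P_ltau: "u \<in> {1..n} \<Longrightarrow> P (basis_l (int (\<tau> u))) = Q u"
proof -
  assume u: "u \<in> {1..n}"
  then have h: "int (\<tau> u) \<in> {-1..int n}" using tau_in[OF u] by auto
  show ?thesis by (subst Phi_basis_eq[OF h]) (rule Pb_tau[OF u])
qed

lemma Q_eq: "Q u = (if u \<in> S then (\<lambda>j. basis_l 0 j - basis_l (int u) j) else basis_l (int u))"
  by (rule ext) (simp add: Q_def)

lemma Q_F: "u \<in> {1..n} \<Longrightarrow> Q u \<in> Fset"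
proof -
  assume u: "u \<in> {1..n}"
  show ?thesis
  proof (cases "u \<in> S")
    case True
    then have "Q u = (\<lambda>j. basis_l 0 j - basis_l (int u) j)" by (simp add: Q_eq)
    then show ?thesis unfolding Fset_def by (rule UnI2[OF image_eqI[OF _ u]])
  next
    case False
    then have "Q u = basis_l (int u)" by (simp add: Q_eq)
    then show ?thesis unfolding Fset_def by (rule UnI1[OF image_eqI[OF _ u]])
  qed
qed

lemma P_F: "y \<in> Fset \<Longrightarrow> P y \<in> Fset"
proof -
  assume y: "y \<in> Fset"
  have pv: "P (basis_l (int v)) \<in> Fset" if v: "v \<in> {1..n}" for v
  proof -
    have "v \<in> \<tau> ` {1..n}" unfolding tau_image by (rule v)
    then obtain u where u: "u \<in> {1..n}" "v = \<tau> u" by blast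
    show ?thesis using u P_ltau Q_F by simp
  qed
  have pv2: "P (\<lambda>j. basis_l 0 j - basis_l (int v) j) \<in> Fset" if v: "v \<in> {1..n}" for v
  proof -
    have "v \<in> \<tau> ` {1..n}" unfolding tau_image by (rule v)
    then obtain u where u: "u \<in> {1..n}" "v = \<tau> u" by blast
    have "P (\<lambda>j. basis_l 0 j - basis_l (int v) j) = (\<lambda>j. basis_l 0 j - Q u j)"
      using u by (simp add: Phi_diff P_l0 P_ltau)
    also have "\<dots> \<in> Fset"
    proof (cases "u \<in> S")
      case True
      then have "(\<lambda>j. basis_l 0 j - Q u j) = basis_l (int u)" unfolding Q_eq by auto
      then show ?thesis using u(1) unfolding Fset_def by auto
    next
      case False
      then have "(\<lambda>j. basis_l 0 j - Q u j) = (\<lambda>j. basis_l 0 j - basis_l (int u) j)" unfolding Q_eq by auto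
      then show ?thesis using u(1) unfolding Fset_def by auto
    qed
    finally show ?thesis .
  qed
  show ?thesis using y pv pv2 unfolding Fset_def by blast
qed

lemma pow_F: "y \<in> Fset \<Longrightarrow> (P ^^ k) y \<in> Fset"
  by (induction k) (auto simp: P_F)

definition fixv :: "int \<Rightarrow> int" where
  "fixv = (\<lambda>j. 2 * basis_l (-1) j - (\<Sum>v\<in>{1..n}. basis_l (int v) j))"

lemma sum_l_val: "(\<Sum>v\<in>{1..n}. basis_l (int v) j) = (if j \<in> int ` {1..n} then 1 else 0)"
proof (cases "j \<in> int ` {1..n}")
  case True
  then obtain u where u: "u \<in> {1..n}" "j = int u" by auto
  have "(\<Sum>v\<in>{1..n}. basis_l (int v) j) = (\<Sum>v\<in>{1..n}. if v = u then 1 else 0)"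
    by (rule sum.cong) (auto simp: basis_l_def u)
  also have "\<dots> = 1" using u by (subst sum.delta) auto
  finally show ?thesis using True by simp
next
  case False
  then show ?thesis by (auto simp: basis_l_def intro!: sum.neutral)
qed

lemma two_half: "2 * int (card S div 2) = int (card S)"
  using Seven by (auto elim!: evenE)

lemma P_fixv: "P fixv = fixv"
proof
  fix j
  have fm1: "fixv (-1) = 2" unfolding fixv_def sum_l_val by (auto simp: basis_l_def)
  have f0: "fixv 0 = 0" unfolding fixv_def sum_l_val by (auto simp: basis_l_def)
  have fu: "fixv (int u) = -1" if "u \<in> {1..n}" for u
    unfolding fixv_def sum_l_val using that by (auto simp: basis_l_def)
  have sumS: "(\<Sum>u\<in>S. fixv (int (\<tau> u))) = - int (card S)"
    using fu tau_in Ssub by (simp add: subset_iff)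
  show "P fixv j = fixv j"
  proof (cases "j \<in> {-1..int n}")
    case False
    then show ?thesis using coord_out unfolding fixv_def sum_l_val by (auto simp: basis_l_def)
  next
    case True
    then consider "j = -1" | "j = 0" | u where "u \<in> {1..n}" "j = int u"
    proof -
      assume h1: "j = -1 \<Longrightarrow> thesis" and h2: "j = 0 \<Longrightarrow> thesis"
        and h3: "\<And>u. u \<in> {1..n} \<Longrightarrow> j = int u \<Longrightarrow> thesis"
      show thesis
      proof (cases "j = -1 \<or> j = 0")
        case False
        then have "nat j \<in> {1..n}" "j = int (nat j)" using True by auto
        then show ?thesis using h3 by blast
      qed (use h1 h2 in blast)
    qed
    then show ?thesis
    proof cases
      case 1 then show ?thesis by (simp add: coord_m1)
    next
      case 2 then show ?thesis by (simp add: coord_0 fm1 f0 sumS two_half)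
    next
      case 3 then show ?thesis using fu tau_in by (simp add: coord_pos fm1 eps_def)
    qed
  qed
qed

lemma pow_fixv: "(P ^^ k) fixv = fixv"
  by (induction k) (auto simp: P_fixv)

lemma two_lm1: "(\<lambda>j. 2 * basis_l (-1) j) = (\<lambda>j. fixv j + (\<Sum>v\<in>{1..n}. basis_l (int v) j))"
  unfolding fixv_def by auto

lemma pow_lm1: "(\<lambda>j. 2 * (P ^^ k) (basis_l (-1)) j) = (\<lambda>j. fixv j + (\<Sum>v\<in>{1..n}. (P ^^ k) (basis_l (int v)) j))"
proof -
  have "(\<lambda>j. 2 * (P ^^ k) (basis_l (-1)) j) = (P ^^ k) (\<lambda>j. 2 * basis_l (-1) j)"
    by (simp add: pow_smult)
  also have "\<dots> = (\<lambda>j. fixv j + (\<Sum>v\<in>{1..n}. (P ^^ k) (basis_l (int v)) j))"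
    unfolding two_lm1 pow_add pow_fixv by (subst pow_sum) auto
  finally show ?thesis .
qed

lemma finite_order: "\<exists>a b. a < b \<and> (P ^^ Suc a) = (P ^^ Suc b)"
proof -
  define f where "f k = (\<lambda>v\<in>{1..n}. (P ^^ k) (basis_l (int v)))" for k
  have lF: "basis_l (int v) \<in> Fset" if "v \<in> {1..n}" for v unfolding Fset_def using that by blast
  have "range f \<subseteq> {1..n} \<rightarrow>\<^sub>E Fset"
    using pow_F[OF lF] unfolding f_def by auto
  then have "finite (range f)" using Fset_fin finite_PiE finite_subset by (metis finite_atLeastAtMost)
  then have "\<not> inj f" using finite_imageD infinite_UNIV_nat by blast
  then obtain a b where ab: "a \<noteq> b" "f a = f b" unfolding inj_def by blast
  then have "\<exists>a b. a < b \<and> f a = f b" by (metis linorder_neqE_nat)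
  then obtain a b where ab: "a < b" "f a = f b" by blast
  have lv: "(P ^^ a) (basis_l (int v)) = (P ^^ b) (basis_l (int v))" if "v \<in> {1..n}" for v
  proof -
    have "f a v = f b v" using ab(2) by simp
    then show ?thesis using that unfolding f_def by simp
  qed
  have lm1: "(P ^^ a) (basis_l (-1)) = (P ^^ b) (basis_l (-1))"
  proof -
    have "(\<lambda>j. 2 * (P ^^ a) (basis_l (-1)) j) = (\<lambda>j. 2 * (P ^^ b) (basis_l (-1)) j)"
      unfolding pow_lm1 using lv by simp
    then show ?thesis by (auto simp: fun_eq_iff)
  qed
  have all: "\<forall>i\<in>{-1..int n}. (P ^^ a) (basis_l i) = (P ^^ b) (basis_l i)"
  proof
    fix i assume i: "i \<in> {-1..int n}"
    show "(P ^^ a) (basis_l i) = (P ^^ b) (basis_l i)"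
    proof (cases "i = -1 \<or> i = 0")
      case True then show ?thesis using lm1 pow_l0 by auto
    next
      case False
      then have "nat i \<in> {1..n}" "i = int (nat i)" using i by auto
      then show ?thesis using lv by metis
    qed
  qed
  have "(P ^^ Suc a) = (P ^^ Suc b)"
  proof
    fix x
    show "(P ^^ Suc a) x = (P ^^ Suc b) x"
      unfolding funpow_Suc_right comp_def using pow_basis_det[OF Phi_pic all] .
  qed
  then show ?thesis using ab(1) by blast
qed

end

context wd begin

definition orb :: "nat \<Rightarrow> nat set" where "orb i = {(\<tau> ^^ k) i | k. True}"

lemma tau_out: "u \<notin> {1..n} \<Longrightarrow> \<tau> u = u"
  using perm by (simp add: permutes_def)

lemma powt_in: "i \<in> {1..n} \<Longrightarrow> (\<tau> ^^ k) i \<in> {1..n}"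
proof (induction k)
  case (Suc k)
  then have "(\<tau> ^^ k) i \<in> {1..n}" by blast
  then show ?case unfolding funpow.simps comp_apply by (rule tau_in)
qed simp

lemma orb_sub: "i \<in> {1..n} \<Longrightarrow> orb i \<subseteq> {1..n}"
  unfolding orb_def using powt_in by auto

lemma orb_fin: "i \<in> {1..n} \<Longrightarrow> finite (orb i)"
  using orb_sub finite_subset by blast

lemma orb_self: "i \<in> orb i"
  unfolding orb_def by (auto intro: exI[of _ 0])

lemma orb_img: "\<tau> ` orb i = orb (\<tau> i)"
proof -
  have "\<tau> ((\<tau> ^^ k) i) = (\<tau> ^^ k) (\<tau> i)" for k
    by (metis comp_apply funpow_Suc_right funpow.simps(2))
  then show ?thesis unfolding orb_def by (auto simp: image_iff) (metis)
qed

lemma orb_closed: "\<tau> ` orb i \<subseteq> orb i"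
proof -
  have "\<tau> ((\<tau> ^^ k) i) = (\<tau> ^^ Suc k) i" for k by simp
  then show ?thesis unfolding orb_def by blast
qed

lemma orb_tau: "i \<in> {1..n} \<Longrightarrow> orb (\<tau> i) = orb i"
proof -
  assume i: "i \<in> {1..n}"
  have "\<tau> ` orb i = orb i"
    by (rule endo_inj_surj[OF orb_fin[OF i] orb_closed]) (use tau_inj inj_on_subset in blast)
  then show ?thesis using orb_img by simp
qed

lemma orb_pow: "i \<in> {1..n} \<Longrightarrow> orb ((\<tau> ^^ k) i) = orb i"
proof (induction k)
  case (Suc k)
  have "orb ((\<tau> ^^ Suc k) i) = orb (\<tau> ((\<tau> ^^ k) i))" by simp
  also have "\<dots> = orb ((\<tau> ^^ k) i)" by (rule orb_tau[OF powt_in[OF Suc.prems]])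
  finally show ?case using Suc by simp
qed simp

lemma orb_eq: "i \<in> {1..n} \<Longrightarrow> j \<in> orb i \<Longrightarrow> orb j = orb i"
proof -
  assume i: "i \<in> {1..n}" and j: "j \<in> orb i"
  obtain k where "j = (\<tau> ^^ k) i" using j unfolding orb_def by auto
  then show ?thesis using orb_pow[OF i] by simp
qed

lemma orb_in: "i \<in> {1..n} \<Longrightarrow> j \<in> orb i \<Longrightarrow> j \<in> {1..n}"
  using orb_sub by blast

lemma orb_tau_iff: "i \<in> {1..n} \<Longrightarrow> \<tau> u \<in> orb i \<longleftrightarrow> u \<in> orb i"
proof
  assume i: "i \<in> {1..n}" and t: "\<tau> u \<in> orb i"
  have u: "u \<in> {1..n}" using t orb_in[OF i] tau_out by metis
  have "orb u = orb i" using orb_tau[OF u] orb_eq[OF i t] by simp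
  then show "u \<in> orb i" using orb_self by metis
next
  assume "i \<in> {1..n}" "u \<in> orb i"
  then show "\<tau> u \<in> orb i" using orb_closed by blast
qed

definition R :: "nat set" where "R = {j \<in> {1..n}. \<forall>k. j \<le> (\<tau> ^^ k) j}"

lemma R_sub: "R \<subseteq> {1..n}" unfolding R_def by auto

lemma R_uniq: "r \<in> R \<Longrightarrow> r' \<in> R \<Longrightarrow> i \<in> {1..n} \<Longrightarrow> r \<in> orb i \<Longrightarrow> r' \<in> orb i \<Longrightarrow> r = r'"
proof -
  assume r: "r \<in> R" and r': "r' \<in> R" and i: "i \<in> {1..n}" and ri: "r \<in> orb i" and ri': "r' \<in> orb i"
  have e: "orb r = orb r'" using orb_eq[OF i ri] orb_eq[OF i ri'] by simp
  have "r' \<in> orb r" using e orb_self by metis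
  then obtain k where "r' = (\<tau> ^^ k) r" unfolding orb_def by auto
  then have "r \<le> r'" using r unfolding R_def by auto
  moreover have "r \<in> orb r'" using e orb_self by metis
  then obtain k where "r = (\<tau> ^^ k) r'" unfolding orb_def by auto
  then have "r' \<le> r" using r' unfolding R_def by auto
  ultimately show ?thesis by simp
qed

lemma ex_R: "i \<in> {1..n} \<Longrightarrow> \<exists>k. (\<tau> ^^ k) i \<in> R"
proof -
  assume i: "i \<in> {1..n}"
  define m where "m = Min (orb i)"
  have "m \<in> orb i" unfolding m_def using orb_fin[OF i] orb_self by (metis Min_in empty_iff)
  then obtain a where a: "m = (\<tau> ^^ a) i" unfolding orb_def by auto
  have "m \<in> R" unfolding R_def
  proof (intro CollectI conjI allI)
    show "m \<in> {1..n}" using a powt_in[OF i] by simp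
    fix k
    have "(\<tau> ^^ k) m = (\<tau> ^^ (k + a)) i" using a by (simp add: funpow_add)
    then have "(\<tau> ^^ k) m \<in> orb i" unfolding orb_def by auto
    then show "m \<le> (\<tau> ^^ k) m" unfolding m_def using orb_fin[OF i] by simp
  qed
  then show ?thesis using a by blast
qed

definition ht :: "nat \<Rightarrow> nat" where "ht i = (LEAST k. (\<tau> ^^ k) i \<in> R)"
definition rep :: "nat \<Rightarrow> nat" where "rep i = (\<tau> ^^ ht i) i"

lemma rep_R: "i \<in> {1..n} \<Longrightarrow> rep i \<in> R"
  unfolding rep_def ht_def using ex_R by (metis LeastI)

lemma rep_orb: "rep i \<in> orb i"
  unfolding rep_def orb_def by auto

lemma ht_R: "i \<in> R \<Longrightarrow> ht i = 0"
  unfolding ht_def by (simp add: Least_eq_0)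

lemma ht_notR: "i \<in> {1..n} \<Longrightarrow> i \<notin> R \<Longrightarrow> ht i = Suc (ht (\<tau> i))"
proof -
  assume i: "i \<in> {1..n}" and nR: "i \<notin> R"
  have ti: "\<tau> i \<in> {1..n}" using tau_in[OF i] .
  have h0: "ht i \<noteq> 0"
  proof
    assume "ht i = 0"
    then have "rep i = i" unfolding rep_def by simp
    then show False using rep_R[OF i] nR by simp
  qed
  then obtain m where m: "ht i = Suc m" using not0_implies_Suc by blast
  have "(\<tau> ^^ m) (\<tau> i) \<in> R" using rep_R[OF i] m unfolding rep_def by (simp add: funpow_swap1)
  then have le1: "ht (\<tau> i) \<le> m" unfolding ht_def by (rule Least_le)
  have "(\<tau> ^^ Suc (ht (\<tau> i))) i \<in> R" using rep_R[OF ti] unfolding rep_def by (simp add: funpow_Suc_right del: funpow.simps)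
  then have "ht i \<le> Suc (ht (\<tau> i))" unfolding ht_def by (rule Least_le)
  then show ?thesis using le1 m by simp
qed

definition th :: "nat \<Rightarrow> int" where "th i = (\<Prod>k<ht i. eps ((\<tau> ^^ k) i))"

lemma th_R: "i \<in> R \<Longrightarrow> th i = 1"
  unfolding th_def by (simp add: ht_R)

lemma th_notR: "i \<in> {1..n} \<Longrightarrow> i \<notin> R \<Longrightarrow> th i = eps i * th (\<tau> i)"
proof -
  assume i: "i \<in> {1..n}" and nR: "i \<notin> R"
  have "th i = (\<Prod>k<Suc (ht (\<tau> i)). eps ((\<tau> ^^ k) i))" unfolding th_def ht_notR[OF i nR] ..
  also have "\<dots> = eps i * (\<Prod>k<ht (\<tau> i). eps ((\<tau> ^^ Suc k) i))"
    by (subst prod.lessThan_Suc_shift) simp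
  also have "\<dots> = eps i * th (\<tau> i)"
    unfolding th_def by (simp add: funpow_Suc_right del: funpow.simps)
  finally show ?thesis .
qed

lemma eps_pm: "eps u = 1 \<or> eps u = -1" unfolding eps_def by auto

lemma eps_sq: "eps u * eps u = 1" unfolding eps_def by auto

lemma prod_pm: "finite A \<Longrightarrow> (\<And>k. k \<in> A \<Longrightarrow> g k = 1 \<or> g k = (-1::int)) \<Longrightarrow> prod g A = 1 \<or> prod g A = -1"
proof (induction A rule: finite_induct)
  case (insert x F)
  have "g x = 1 \<or> g x = -1" using insert.prems by auto
  moreover have "prod g F = 1 \<or> prod g F = -1" using insert by auto
  ultimately show ?case by (elim disjE) (simp_all add: insert(1,2))
qed simp

lemma th_pm: "th i = 1 \<or> th i = -1"
  unfolding th_def by (rule prod_pm) (auto simp: eps_pm)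

lemma th_sq: "th i * th i = 1"
  using th_pm[of i] by auto

lemma rep_uniq: "i \<in> {1..n} \<Longrightarrow> r \<in> R \<Longrightarrow> r \<in> orb i \<Longrightarrow> rep i = r"
  using R_uniq rep_R rep_orb by blast

lemma R_orb_notR: "r \<in> R \<Longrightarrow> u \<in> orb r \<Longrightarrow> u \<noteq> r \<Longrightarrow> u \<notin> R"
  using R_uniq[of r u r] R_sub orb_self by blast

end

context wd begin

definition sg :: "nat \<Rightarrow> int" where "sg r = eps r * th (\<tau> r)"

definition ind :: "nat \<Rightarrow> int" where "ind u = (if u \<in> S then 1 else 0)"

lemma eps_ind: "eps u = 1 - 2 * ind u" unfolding eps_def ind_def by auto

lemma R_in: "r \<in> R \<Longrightarrow> r \<in> {1..n}" using R_sub by blast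

lemma sum_orb_tau: "i \<in> {1..n} \<Longrightarrow> (\<Sum>u\<in>orb i. g (\<tau> u)) = (\<Sum>u\<in>orb i. g u)"
proof -
  assume i: "i \<in> {1..n}"
  have img: "\<tau> ` orb i = orb i" using orb_img orb_tau[OF i] by simp
  have "(\<Sum>u\<in>orb i. g u) = (\<Sum>u\<in>\<tau> ` orb i. g u)" using img by simp
  also have "\<dots> = (\<Sum>u\<in>orb i. g (\<tau> u))"
    by (rule sum.reindex_cong[of \<tau>]) (use tau_inj inj_on_subset in auto)
  finally show ?thesis by simp
qed

lemma prod_orb_tau: "i \<in> {1..n} \<Longrightarrow> (\<Prod>u\<in>orb i. g (\<tau> u)) = (\<Prod>u\<in>orb i. g u)"
proof -
  assume i: "i \<in> {1..n}"
  have img: "\<tau> ` orb i = orb i" using orb_img orb_tau[OF i] by simp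
  have "(\<Prod>u\<in>orb i. g u) = (\<Prod>u\<in>\<tau> ` orb i. g u)" using img by simp
  also have "\<dots> = (\<Prod>u\<in>orb i. g (\<tau> u))"
    by (rule prod.reindex_cong[of \<tau>]) (use tau_inj inj_on_subset in auto)
  finally show ?thesis by simp
qed

lemma th_rel: "r \<in> R \<Longrightarrow> u \<in> orb r \<Longrightarrow> th u = eps u * th (\<tau> u) * (if u = r then sg r else 1)"
proof (cases "u = r")
  case True
  assume r: "r \<in> R"
  have "eps r * th (\<tau> r) * (eps r * th (\<tau> r)) = (eps r * eps r) * (th (\<tau> r) * th (\<tau> r))"
    by (simp add: algebra_simps)
  also have "\<dots> = 1" by (simp add: eps_sq th_sq)
  finally show ?thesis using True th_R[OF r] by (simp add: sg_def)
next
  case False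
  assume r: "r \<in> R" and u: "u \<in> orb r"
  have "u \<notin> R" using R_orb_notR[OF r u False] .
  moreover have "u \<in> {1..n}" using orb_in[OF R_in[OF r] u] .
  ultimately show ?thesis using False th_notR by simp
qed

lemma prod_eps: "finite A \<Longrightarrow> (\<Prod>u\<in>A. eps u) = (-1) ^ card (A \<inter> S)"
proof (induction A rule: finite_induct)
  case (insert x F)
  have fin: "finite (F \<inter> S)" using insert(1) by simp
  show ?case
  proof (cases "x \<in> S")
    case True
    then have "insert x F \<inter> S = insert x (F \<inter> S)" by auto
    then have "card (insert x F \<inter> S) = Suc (card (F \<inter> S))" using insert(2) fin by simp
    then show ?thesis using insert True by (simp add: eps_def)
  next
    case False
    then have "insert x F \<inter> S = F \<inter> S" by auto
    then show ?thesis using insert False by (simp add: eps_def)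
  qed
qed simp

lemma sg_pm: "sg r = 1 \<or> sg r = -1"
  using eps_pm[of r] th_pm[of "\<tau> r"] unfolding sg_def by auto

lemma cyc_prod: "r \<in> R \<Longrightarrow> (\<Prod>u\<in>orb r. eps u) = sg r"
proof -
  assume r: "r \<in> R"
  have ri: "r \<in> {1..n}" using R_in[OF r] .
  define Xp where "Xp = (\<Prod>u\<in>orb r. th u)"
  define Ep where "Ep = (\<Prod>u\<in>orb r. eps u)"
  have "Xp = (\<Prod>u\<in>orb r. eps u * th (\<tau> u) * (if u = r then sg r else 1))"
    unfolding Xp_def by (rule prod.cong) (use th_rel[OF r] in auto)
  also have "\<dots> = Ep * (\<Prod>u\<in>orb r. th (\<tau> u)) * (\<Prod>u\<in>orb r. (if u = r then sg r else 1))"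
    unfolding Ep_def by (simp add: prod.distrib)
  also have "(\<Prod>u\<in>orb r. th (\<tau> u)) = Xp" unfolding Xp_def by (rule prod_orb_tau[OF ri])
  also have "(\<Prod>u\<in>orb r. (if u = r then sg r else 1)) = sg r"
    using orb_fin[OF ri] orb_self[of r] by (subst prod.delta) auto
  finally have eq: "Xp = Ep * Xp * sg r" .
  have "Xp = 1 \<or> Xp = -1" unfolding Xp_def by (rule prod_pm) (use orb_fin[OF ri] th_pm in auto)
  then have "Ep * sg r = 1" using eq by (auto simp: algebra_simps)
  then show ?thesis unfolding Ep_def using sg_pm[of r] by auto
qed

definition Reven :: "nat set" where "Reven = {r \<in> R. even (card (S \<inter> orb r))}"
definition Rodd :: "nat set" where "Rodd = {r \<in> R. odd (card (S \<inter> orb r))}"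

lemma sg_even: "r \<in> Reven \<Longrightarrow> sg r = 1"
proof -
  assume r: "r \<in> Reven"
  then have rR: "r \<in> R" unfolding Reven_def by simp
  have "sg r = (-1) ^ card (orb r \<inter> S)" using cyc_prod[OF rR] prod_eps[OF orb_fin[OF R_in[OF rR]]] by simp
  also have "\<dots> = 1" using r unfolding Reven_def by (simp add: Int_commute)
  finally show ?thesis .
qed

lemma sg_odd: "r \<in> Rodd \<Longrightarrow> sg r = -1"
proof -
  assume r: "r \<in> Rodd"
  then have rR: "r \<in> R" unfolding Rodd_def by simp
  have "sg r = (-1) ^ card (orb r \<inter> S)" using cyc_prod[OF rR] prod_eps[OF orb_fin[OF R_in[OF rR]]] by simp
  also have "\<dots> = -1" using r unfolding Rodd_def by (simp add: Int_commute)
  finally show ?thesis .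
qed

lemma th_even: "r \<in> Reven \<Longrightarrow> u \<in> orb r \<Longrightarrow> th (\<tau> u) = eps u * th u"
proof -
  assume r: "r \<in> Reven" and u: "u \<in> orb r"
  have rR: "r \<in> R" using r unfolding Reven_def by simp
  have "th u = eps u * th (\<tau> u)" using th_rel[OF rR u] sg_even[OF r] by simp
  then have "eps u * th u = (eps u * eps u) * th (\<tau> u)" by simp
  then show ?thesis by (simp add: eps_sq)
qed

definition phi :: "nat \<Rightarrow> (int \<Rightarrow> int) \<Rightarrow> int" where
  "phi r y = (\<Sum>u\<in>orb r. th u * y (int u))"

lemma coord_pos': "u \<in> {1..n} \<Longrightarrow> P y (int u) = - y (-1) * ind u + eps u * y (int (\<tau> u))"
  using coord_pos by (simp add: ind_def)

lemma sum_ind: "finite A \<Longrightarrow> (\<Sum>u\<in>A. ind u) = int (card (S \<inter> A))"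
proof -
  assume A: "finite A"
  have "int (card (S \<inter> A)) = (\<Sum>u\<in>A \<inter> S. 1)" by (simp add: Int_commute)
  also have "\<dots> = (\<Sum>u\<in>A. if u \<in> S then 1 else 0)" by (rule sum.inter_restrict[OF A])
  finally show ?thesis by (simp add: ind_def)
qed

lemma phi_inv: "r \<in> Reven \<Longrightarrow> phi r (P y) = phi r y"
proof -
  assume r: "r \<in> Reven"
  have rR: "r \<in> R" using r unfolding Reven_def by simp
  have ri: "r \<in> {1..n}" using R_in[OF rR] .
  have uin: "u \<in> {1..n}" if "u \<in> orb r" for u using orb_in[OF ri that] .
  have "phi r (P y) = (\<Sum>u\<in>orb r. th u * (- y (-1) * ind u + eps u * y (int (\<tau> u))))"
    unfolding phi_def
  proof (rule sum.cong[OF refl])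
    fix u assume "u \<in> orb r"
    then show "th u * P y (int u) = th u * (- y (-1) * ind u + eps u * y (int (\<tau> u)))"
      using coord_pos'[OF uin] by simp
  qed
  also have "\<dots> = (\<Sum>u\<in>orb r. - y (-1) * (th u * ind u) + th (\<tau> u) * y (int (\<tau> u)))"
    by (rule sum.cong) (auto simp: th_even[OF r] algebra_simps)
  also have "\<dots> = - y (-1) * (\<Sum>u\<in>orb r. th u * ind u) + (\<Sum>u\<in>orb r. th (\<tau> u) * y (int (\<tau> u)))"
    by (simp only: sum.distrib sum_distrib_left)
  also have "(\<Sum>u\<in>orb r. th (\<tau> u) * y (int (\<tau> u))) = phi r y"
    unfolding phi_def by (rule sum_orb_tau[OF ri])
  also have "(\<Sum>u\<in>orb r. th u * ind u) = 0"
  proof -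
    have "(\<Sum>u\<in>orb r. th u) = (\<Sum>u\<in>orb r. th (\<tau> u))" by (rule sum_orb_tau[OF ri, symmetric])
    also have "\<dots> = (\<Sum>u\<in>orb r. th u - 2 * (th u * ind u))"
      by (rule sum.cong) (auto simp: th_even[OF r] eps_ind algebra_simps)
    also have "\<dots> = (\<Sum>u\<in>orb r. th u) - 2 * (\<Sum>u\<in>orb r. th u * ind u)"
      by (simp add: sum_subtractf sum_distrib_left)
    finally show ?thesis by simp
  qed
  finally show ?thesis by simp
qed

definition dd :: "(int \<Rightarrow> int) \<Rightarrow> int" where
  "dd y = 2 * y 0 + (\<Sum>u\<in>{1..n}. y (int u))"

lemma dd_inv: "dd (P y) = dd y"
proof -
  have s1: "(\<Sum>u\<in>{1..n}. P y (int u)) = (\<Sum>u\<in>{1..n}. - y (-1) * ind u + eps u * y (int (\<tau> u)))"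
    by (rule sum.cong) (auto simp: coord_pos')
  also have "\<dots> = (\<Sum>u\<in>{1..n}. - y (-1) * ind u + y (int (\<tau> u)) - 2 * (ind u * y (int (\<tau> u))))"
    by (rule sum.cong) (auto simp: eps_ind algebra_simps)
  also have "\<dots> = - y (-1) * (\<Sum>u\<in>{1..n}. ind u) + (\<Sum>u\<in>{1..n}. y (int (\<tau> u))) - 2 * (\<Sum>u\<in>{1..n}. ind u * y (int (\<tau> u)))"
    by (simp only: sum.distrib sum_subtractf sum_distrib_left)
  also have "(\<Sum>u\<in>{1..n}. ind u) = int (card S)"
    using sum_ind[of "{1..n}"] Ssub by (simp add: Int_absorb2)
  also have "(\<Sum>u\<in>{1..n}. y (int (\<tau> u))) = (\<Sum>u\<in>{1..n}. y (int u))"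
    by (rule sum_tau[symmetric])
  also have "(\<Sum>u\<in>{1..n}. ind u * y (int (\<tau> u))) = (\<Sum>u\<in>S. y (int (\<tau> u)))"
  proof -
    have "(\<Sum>u\<in>{1..n}. ind u * y (int (\<tau> u))) = (\<Sum>u\<in>{1..n}. if u \<in> S then y (int (\<tau> u)) else 0)"
      by (rule sum.cong) (auto simp: ind_def)
    also have "\<dots> = (\<Sum>u\<in>{1..n} \<inter> S. y (int (\<tau> u)))" by (rule sum.inter_restrict[symmetric]) simp
    also have "{1..n} \<inter> S = S" using Ssub by auto
    finally show ?thesis .
  qed
  finally have "(\<Sum>u\<in>{1..n}. P y (int u)) = - y (-1) * int (card S) + (\<Sum>u\<in>{1..n}. y (int u)) - 2 * (\<Sum>u\<in>S. y (int (\<tau> u)))" .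
  moreover have "2 * (y (-1) * int (card S div 2)) = int (card S) * y (-1)"
    using two_half by (metis mult.assoc mult.commute)
  ultimately show ?thesis unfolding dd_def coord_0 by (simp only: distrib_left) (simp add: algebra_simps)
qed

lemma parity: "i \<in> {1..n} \<Longrightarrow> \<exists>k. (\<Sum>u\<in>orb i. P y (int u) - y (int u)) = - y (-1) * int (card (S \<inter> orb i)) + 2 * k"
proof -
  assume i: "i \<in> {1..n}"
  have uin: "u \<in> {1..n}" if "u \<in> orb i" for u using orb_in[OF i that] .
  have "(\<Sum>u\<in>orb i. P y (int u) - y (int u)) = (\<Sum>u\<in>orb i. - y (-1) * ind u + eps u * y (int (\<tau> u)) - y (int u))"
  proof (rule sum.cong[OF refl])
    fix u assume "u \<in> orb i"
    then show "P y (int u) - y (int u) = - y (-1) * ind u + eps u * y (int (\<tau> u)) - y (int u)"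
      using coord_pos'[OF uin] by simp
  qed
  also have "\<dots> = (\<Sum>u\<in>orb i. - y (-1) * ind u + y (int (\<tau> u)) - y (int u) - 2 * (ind u * y (int (\<tau> u))))"
    by (rule sum.cong) (auto simp: eps_ind algebra_simps)
  also have "\<dots> = - y (-1) * (\<Sum>u\<in>orb i. ind u) + (\<Sum>u\<in>orb i. y (int (\<tau> u))) - (\<Sum>u\<in>orb i. y (int u))
      - 2 * (\<Sum>u\<in>orb i. ind u * y (int (\<tau> u)))"
    by (simp only: sum.distrib sum_subtractf sum_distrib_left)
  also have "(\<Sum>u\<in>orb i. y (int (\<tau> u))) = (\<Sum>u\<in>orb i. y (int u))" by (rule sum_orb_tau[OF i])
  also have "(\<Sum>u\<in>orb i. ind u) = int (card (S \<inter> orb i))" by (rule sum_ind[OF orb_fin[OF i]])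
  finally show ?thesis by (intro exI[of _ "- (\<Sum>u\<in>orb i. ind u * y (int (\<tau> u)))"]) simp
qed

end

context wd begin

lemma tau_neq: "u \<in> {1..n} \<Longrightarrow> u \<notin> R \<Longrightarrow> \<tau> u \<noteq> u"
proof
  assume u: "u \<in> {1..n}" and nR: "u \<notin> R" and t: "\<tau> u = u"
  have "(\<tau> ^^ k) u = u" for k by (induction k) (auto simp: t)
  then have "u \<in> R" using u unfolding R_def by auto
  then show False using nR by simp
qed

lemma basis_pic: "i \<in> {-1..int n} \<Longrightarrow> basis_l i \<in> pic n"
  unfolding pic_def basis_l_def by auto

lemma pic_diff: "a \<in> pic n \<Longrightarrow> b \<in> pic n \<Longrightarrow> (\<lambda>j. a j - b j) \<in> pic n"
  unfolding pic_def by auto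

lemma pic_add: "a \<in> pic n \<Longrightarrow> b \<in> pic n \<Longrightarrow> (\<lambda>j. a j + b j) \<in> pic n"
  unfolding pic_def by auto

lemma pic_smult: "a \<in> pic n \<Longrightarrow> (\<lambda>j. c * a j) \<in> pic n"
  unfolding pic_def by auto

definition Hm :: "(int \<Rightarrow> int) \<Rightarrow> int" where
  "Hm y = (\<Sum>v\<in>{1..n}. int (ht v) * \<bar>y (int v)\<bar>)"

lemma Hm_nonneg: "Hm y \<ge> 0" unfolding Hm_def by (auto intro: sum_nonneg)

lemma reduce_step:
  assumes y: "y \<in> pic n" "y (-1) = 0" and u: "u \<in> {1..n}" "u \<notin> R" "y (int u) \<noteq> 0"
  defines "c \<equiv> eps u * y (int u)"
  defines "y' \<equiv> (\<lambda>j. y j - c * (P (basis_l (int (\<tau> u))) j - basis_l (int (\<tau> u)) j))"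
  shows "y' \<in> pic n" "y' (-1) = 0" "Hm y' < Hm y"
proof -
  have tu: "\<tau> u \<in> {1..n}" using tau_in[OF u(1)] .
  have ne: "\<tau> u \<noteq> u" using tau_neq[OF u(1,2)] .
  have bpic: "basis_l (int (\<tau> u)) \<in> pic n" using tu by (intro basis_pic) auto
  show "y' \<in> pic n" unfolding y'_def
    by (intro pic_diff pic_smult y(1) Phi_pic bpic)
  show "y' (-1) = 0" unfolding y'_def using y(2) by (simp add: coord_m1 basis_l_def)
  have Pb: "P (basis_l (int (\<tau> u))) = Q u" using P_ltau[OF u(1)] .
  have yu: "y' (int u) = 0"
    unfolding y'_def c_def Pb using ne eps_sq[of u] u(1) by (auto simp: Q_def basis_l_def eps_def)
  have ytu: "y' (int (\<tau> u)) = y (int (\<tau> u)) + c"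
    unfolding y'_def Pb using ne tu by (auto simp: Q_def basis_l_def)
  have yv: "y' (int v) = y (int v)" if "v \<in> {1..n}" "v \<noteq> u" "v \<noteq> \<tau> u" for v
    unfolding y'_def Pb using that by (auto simp: Q_def basis_l_def)
  have htu: "int (ht u) = int (ht (\<tau> u)) + 1" using ht_notR[OF u(1,2)] by simp
  have absc: "\<bar>c\<bar> = \<bar>y (int u)\<bar>" unfolding c_def using eps_pm[of u] by auto
  define g where "g v = int (ht v) * \<bar>y (int v)\<bar>" for v
  define A where "A v = (if v = \<tau> u then int (ht (\<tau> u)) * \<bar>y (int u)\<bar> else 0) - (if v = u then g u else 0)" for v
  have le: "int (ht v) * \<bar>y' (int v)\<bar> \<le> g v + A v" if "v \<in> {1..n}" for v
  proof -
    consider "v = u" | "v = \<tau> u" | "v \<noteq> u" "v \<noteq> \<tau> u" by blast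
    then show ?thesis
    proof cases
      case 1 then show ?thesis using yu ne unfolding A_def g_def by simp
    next
      case 2
      have "\<bar>y (int (\<tau> u)) + c\<bar> \<le> \<bar>y (int (\<tau> u))\<bar> + \<bar>y (int u)\<bar>" using absc abs_triangle_ineq by metis
      then have "int (ht (\<tau> u)) * \<bar>y (int (\<tau> u)) + c\<bar> \<le> int (ht (\<tau> u)) * (\<bar>y (int (\<tau> u))\<bar> + \<bar>y (int u)\<bar>)"
        by (intro mult_left_mono) auto
      then show ?thesis using 2 ytu ne unfolding A_def g_def by (simp add: algebra_simps)
    next
      case 3 then show ?thesis using yv[OF that] unfolding A_def g_def by simp
    qed
  qed
  have "Hm y' \<le> (\<Sum>v\<in>{1..n}. g v + A v)" unfolding Hm_def by (rule sum_mono) (rule le)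
  also have "\<dots> = Hm y + int (ht (\<tau> u)) * \<bar>y (int u)\<bar> - g u"
    unfolding Hm_def A_def g_def sum.distrib sum_subtractf using tu u(1)
    by (simp add: sum.delta)
  also have "\<dots> = Hm y - \<bar>y (int u)\<bar>" unfolding g_def htu by (simp add: algebra_simps)
  also have "\<dots> < Hm y" using u(3) by simp
  finally show "Hm y' < Hm y" .
qed

lemma reduce:
  "y \<in> pic n \<Longrightarrow> y (-1) = 0 \<Longrightarrow>
   \<exists>z\<in>pic n. z (-1) = 0 \<and> (\<forall>u\<in>{1..n}. u \<notin> R \<longrightarrow> y (int u) = P z (int u) - z (int u))"
proof (induction "nat (Hm y)" arbitrary: y rule: less_induct)
  case less
  show ?case
  proof (cases "\<forall>u\<in>{1..n}. u \<notin> R \<longrightarrow> y (int u) = 0")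
    case True
    have "(\<lambda>j. 0::int) \<in> pic n" unfolding pic_def by simp
    then show ?thesis using True Phi_zero by (intro bexI[of _ "\<lambda>j. 0"]) auto
  next
    case False
    then obtain u where u: "u \<in> {1..n}" "u \<notin> R" "y (int u) \<noteq> 0" by blast
    define c where "c = eps u * y (int u)"
    define b where "b = basis_l (int (\<tau> u))"
    define y' where "y' = (\<lambda>j. y j - c * (P b j - b j))"
    have st: "y' \<in> pic n" "y' (-1) = 0" "Hm y' < Hm y"
      using reduce_step[OF less.prems u] unfolding y'_def c_def b_def by auto
    have "nat (Hm y') < nat (Hm y)" using st(3) Hm_nonneg[of y'] by simp
    then obtain z' where z': "z' \<in> pic n" "z' (-1) = 0"
      "\<forall>u\<in>{1..n}. u \<notin> R \<longrightarrow> y' (int u) = P z' (int u) - z' (int u)"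
      using less.hyps st(1,2) by blast
    define z where "z = (\<lambda>j. z' j + c * b j)"
    have bpic: "b \<in> pic n" unfolding b_def using tau_in[OF u(1)] by (intro basis_pic) auto
    have zp: "z \<in> pic n" unfolding z_def by (intro pic_add pic_smult z'(1) bpic)
    have z1: "z (-1) = 0" unfolding z_def b_def using z'(2) by (simp add: basis_l_def)
    have Pz: "P z = (\<lambda>j. P z' j + c * P b j)" unfolding z_def Phi_add Phi_smult ..
    have e: "P z j - z j = P z' j - z' j + c * (P b j - b j)" for j
      unfolding Pz by (simp add: z_def algebra_simps)
    have "y (int v) = P z (int v) - z (int v)" if "v \<in> {1..n}" "v \<notin> R" for v
    proof -
      have "y' (int v) = P z' (int v) - z' (int v)" using z'(3) that by blast
      then show ?thesis unfolding e y'_def by (simp add: algebra_simps)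
    qed
    then show ?thesis using zp z1 by blast
  qed
qed

end

context wd begin

lemma Rodd_sub: "Rodd \<subseteq> R" unfolding Rodd_def by auto
lemma Reven_sub: "Reven \<subseteq> R" unfolding Reven_def by auto
lemma Rodd_fin: "finite Rodd" using Rodd_sub R_sub finite_subset by (metis finite_atLeastAtMost)
lemma R_split: "r \<in> R \<Longrightarrow> r \<notin> Rodd \<Longrightarrow> r \<in> Reven" unfolding Rodd_def Reven_def by auto

lemma sum_orb_single: "r \<in> R \<Longrightarrow> (\<And>u. u \<in> orb r \<Longrightarrow> u \<noteq> r \<Longrightarrow> g u = 0) \<Longrightarrow> (\<Sum>u\<in>orb r. g u) = (g r :: int)"
proof -
  assume r: "r \<in> R" and h: "\<And>u. u \<in> orb r \<Longrightarrow> u \<noteq> r \<Longrightarrow> g u = 0"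
  have "(\<Sum>u\<in>orb r. g u) = (\<Sum>u\<in>orb r. if u = r then g r else 0)"
    by (rule sum.cong) (use h in auto)
  also have "\<dots> = g r" using orb_fin[OF R_in[OF r]] orb_self[of r] by (subst sum.delta) auto
  finally show ?thesis .
qed

lemma dd_diff: "dd (\<lambda>j. a j - b j) = dd a - dd b"
  unfolding dd_def by (simp add: sum_subtractf algebra_simps)

lemma phi_diff: "phi r (\<lambda>j. a j - b j) = phi r a - phi r b"
  unfolding phi_def by (simp add: sum_subtractf algebra_simps)

definition vv :: "nat \<Rightarrow> int \<Rightarrow> int" where
  "vv r = (\<lambda>j. \<Sum>w\<in>orb r. th w * basis_l (int w) j)"

lemma vv_val: "r \<in> R \<Longrightarrow> vv r (int u) = (if u \<in> orb r then th u else 0)"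
proof -
  assume r: "r \<in> R"
  have "vv r (int u) = (\<Sum>w\<in>orb r. if w = u then th u else 0)"
    unfolding vv_def by (rule sum.cong) (auto simp: basis_l_def)
  also have "\<dots> = (if u \<in> orb r then th u else 0)"
    using orb_fin[OF R_in[OF r]] by (subst sum.delta) auto
  finally show ?thesis .
qed

lemma vv_zero: "r \<in> R \<Longrightarrow> j \<notin> int ` orb r \<Longrightarrow> vv r j = 0"
  unfolding vv_def by (rule sum.neutral) (auto simp: basis_l_def)

lemma vv_pic: "r \<in> R \<Longrightarrow> vv r \<in> pic n"
proof -
  assume r: "r \<in> R"
  have "vv r j = 0" if "j \<notin> {-1..int n}" for j
  proof (rule vv_zero[OF r])
    show "j \<notin> int ` orb r"
    proof
      assume "j \<in> int ` orb r"
      then obtain w where w: "w \<in> orb r" "j = int w" by auto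
      then have "w \<in> {1..n}" using orb_in[OF R_in[OF r]] by blast
      then show False using that w(2) by auto
    qed
  qed
  then show ?thesis unfolding pic_def by auto
qed

lemma vv_m1: "r \<in> R \<Longrightarrow> vv r (-1) = 0"
  by (rule vv_zero) auto

lemma Dv: "r \<in> Rodd \<Longrightarrow> u \<in> {1..n} \<Longrightarrow> P (vv r) (int u) - vv r (int u) = (if u = r then -2 else 0)"
proof -
  assume r: "r \<in> Rodd" and u: "u \<in> {1..n}"
  have rR: "r \<in> R" using r Rodd_sub by blast
  have ri: "r \<in> {1..n}" using R_in[OF rR] .
  have P1: "P (vv r) (int u) = eps u * vv r (int (\<tau> u))"
    using coord_pos'[OF u] vv_m1[OF rR] by simp
  show ?thesis
  proof (cases "u \<in> orb r")
    case True
    then have tu: "\<tau> u \<in> orb r" using orb_tau_iff[OF ri] by blast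
    have rel: "th u = eps u * th (\<tau> u) * (if u = r then sg r else 1)" by (rule th_rel[OF rR True])
    show ?thesis
    proof (cases "u = r")
      case True
      then have "eps u * th (\<tau> u) = -1" using sg_odd[OF r] by (simp add: sg_def)
      moreover have "th u = 1" using True th_R[OF rR] by simp
      ultimately show ?thesis unfolding P1 vv_val[OF rR] using \<open>u \<in> orb r\<close> tu True by simp
    next
      case False
      then show ?thesis unfolding P1 vv_val[OF rR] using \<open>u \<in> orb r\<close> tu rel by simp
    qed
  next
    case False
    then have tu: "\<tau> u \<notin> orb r" using orb_tau_iff[OF ri] by blast
    have "u \<noteq> r" using False orb_self by metis
    then show ?thesis unfolding P1 vv_val[OF rR] using False tu by simp
  qed
qed

lemma final_odd:
  assumes y0: "y0 \<in> pic n" "y0 (-1) = 0" "dd y0 = 0"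
    and zero: "\<forall>u\<in>{1..n}. u \<notin> Rodd \<longrightarrow> y0 (int u) = 0"
    and ev: "\<forall>r\<in>Rodd. even (y0 (int r))"
  shows "\<exists>z\<in>pic n. y0 = (\<lambda>j. P z j - z j)"
proof -
  define kk where "kk r = - (y0 (int r) div 2)" for r
  define z where "z = (\<lambda>j. \<Sum>r\<in>Rodd. kk r * vv r j)"
  have zp: "z \<in> pic n" unfolding z_def pic_def
  proof (intro CollectI allI impI)
    fix j assume "j \<notin> {-1..int n}"
    then have "vv r j = 0" if "r \<in> Rodd" for r using vv_pic[of r] that Rodd_sub unfolding pic_def by blast
    then show "(\<Sum>r\<in>Rodd. kk r * vv r j) = 0" by simp
  qed
  have Pz: "P z = (\<lambda>j. \<Sum>r\<in>Rodd. kk r * P (vv r) j)"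
  proof -
    have "P z = (\<lambda>j. \<Sum>r\<in>Rodd. P (\<lambda>j. kk r * vv r j) j)"
      unfolding z_def by (rule Phi_sum[OF Rodd_fin])
    then show ?thesis by (simp add: Phi_smult)
  qed
  define D where "D = (\<lambda>j. P z j - z j)"
  have Dj: "D j = (\<Sum>r\<in>Rodd. kk r * (P (vv r) j - vv r j))" for j
    unfolding D_def Pz by (simp add: z_def sum_subtractf algebra_simps)
  have Du: "D (int u) = y0 (int u)" if u: "u \<in> {1..n}" for u
  proof -
    have "D (int u) = (\<Sum>r\<in>Rodd. if r = u then -2 * kk u else 0)"
      unfolding Dj
    proof (rule sum.cong[OF refl])
      fix r assume r: "r \<in> Rodd"
      show "kk r * (P (vv r) (int u) - vv r (int u)) = (if r = u then -2 * kk u else 0)"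
        using Dv[OF r u] by auto
    qed
    also have "\<dots> = (if u \<in> Rodd then -2 * kk u else 0)" using Rodd_fin by (subst sum.delta) auto
    also have "\<dots> = y0 (int u)" using zero u ev unfolding kk_def by auto
    finally show ?thesis .
  qed
  have Dm1: "D (-1) = y0 (-1)" unfolding D_def using y0(2) by (simp add: coord_m1)
  have Dout: "D j = y0 j" if "j \<notin> {-1..int n}" for j
    using that y0(1) zp Phi_pic[of z] unfolding D_def pic_def by auto
  have ddD: "dd D = 0" unfolding D_def dd_diff dd_inv by simp
  have "(\<Sum>u\<in>{1..n}. D (int u)) = (\<Sum>u\<in>{1..n}. y0 (int u))" by (rule sum.cong) (auto simp: Du)
  then have D0: "D 0 = y0 0" using ddD y0(3) unfolding dd_def by simp
  have "y0 = D"
  proof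
    fix j
    show "y0 j = D j"
    proof (cases "j \<in> {-1..int n}")
      case False then show ?thesis using Dout by simp
    next
      case True
      show ?thesis
      proof (cases "j = -1 \<or> j = 0")
        case True then show ?thesis using Dm1 D0 by auto
      next
        case False
        then have "nat j \<in> {1..n}" "j = int (nat j)" using \<open>j \<in> {-1..int n}\<close> by auto
        then show ?thesis using Du by metis
      qed
    qed
  qed
  then show ?thesis using zp unfolding D_def by blast
qed

lemma kerB:
  assumes x: "x \<in> pic n" "x (-1) = 0" "dd x = 0" "\<forall>r\<in>Reven. phi r x = 0"
    "\<forall>r\<in>Rodd. even (\<Sum>u\<in>orb r. x (int u))"
  shows "\<exists>z\<in>pic n. x = (\<lambda>j. P z j - z j)"
proof -
  obtain z1 where z1: "z1 \<in> pic n" "z1 (-1) = 0"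
    "\<forall>u\<in>{1..n}. u \<notin> R \<longrightarrow> x (int u) = P z1 (int u) - z1 (int u)"
    using reduce[OF x(1,2)] by blast
  define y0 where "y0 = (\<lambda>j. x j - (P z1 j - z1 j))"
  have y0p: "y0 \<in> pic n" unfolding y0_def by (intro pic_diff x(1) Phi_pic z1(1))
  have y0m: "y0 (-1) = 0" unfolding y0_def using x(2) by (simp add: coord_m1)
  have y0d: "dd y0 = 0" unfolding y0_def dd_diff dd_inv using x(3) by simp
  have y0R: "y0 (int u) = 0" if "u \<in> {1..n}" "u \<notin> R" for u using z1(3) that unfolding y0_def by simp
  have y0orb: "(\<Sum>u\<in>orb r. g u) = g r" if "r \<in> R" "\<And>u. y0 (int u) = 0 \<Longrightarrow> g u = 0" for r and g :: "nat \<Rightarrow> int"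
  proof (rule sum_orb_single[OF that(1), of g])
    fix u assume u: "u \<in> orb r" "u \<noteq> r"
    have "u \<notin> R" using R_orb_notR[OF that(1) u] .
    moreover have "u \<in> {1..n}" using orb_in[OF R_in[OF that(1)] u(1)] .
    ultimately show "g u = 0" using y0R that(2) by blast
  qed
  have evn: "y0 (int r) = 0" if r: "r \<in> Reven" for r
  proof -
    have rR: "r \<in> R" using r Reven_sub by blast
    have "phi r y0 = 0" unfolding y0_def phi_diff phi_inv[OF r] using x(4) r by simp
    moreover have "phi r y0 = th r * y0 (int r)" unfolding phi_def by (rule y0orb[OF rR]) simp
    ultimately show ?thesis using th_R[OF rR] by simp
  qed
  have odd: "even (y0 (int r))" if r: "r \<in> Rodd" for r
  proof -
    have rR: "r \<in> R" using r Rodd_sub by blast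
    obtain k where k: "(\<Sum>u\<in>orb r. P z1 (int u) - z1 (int u)) = - z1 (-1) * int (card (S \<inter> orb r)) + 2 * k"
      using parity[OF R_in[OF rR]] by blast
    have "(\<Sum>u\<in>orb r. y0 (int u)) = (\<Sum>u\<in>orb r. x (int u)) - (\<Sum>u\<in>orb r. P z1 (int u) - z1 (int u))"
      unfolding y0_def by (simp add: sum_subtractf)
    also have "\<dots> = (\<Sum>u\<in>orb r. x (int u)) - 2 * k" using k z1(2) by simp
    finally have "even (\<Sum>u\<in>orb r. y0 (int u))" using x(5) r by simp
    moreover have "(\<Sum>u\<in>orb r. y0 (int u)) = y0 (int r)" by (rule y0orb[OF rR]) simp
    ultimately show ?thesis by simp
  qed
  have zero: "\<forall>u\<in>{1..n}. u \<notin> Rodd \<longrightarrow> y0 (int u) = 0"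
    using y0R evn R_split by blast
  obtain z2 where z2: "z2 \<in> pic n" "y0 = (\<lambda>j. P z2 j - z2 j)"
    using final_odd[OF y0p y0m y0d zero] odd by blast
  define z where "z = (\<lambda>j. z1 j + z2 j)"
  have "x = (\<lambda>j. P z j - z j)"
  proof
    fix j
    have "y0 j = P z2 j - z2 j" using z2(2) by simp
    then show "x j = P z j - z j" unfolding z_def Phi_add y0_def by simp
  qed
  moreover have "z \<in> pic n" unfolding z_def by (intro pic_add z1(1) z2(1))
  ultimately show ?thesis by blast
qed

end

context wd begin

abbreviation Gc where "Gc \<equiv> cyc n \<tau> S"

lemma G_iff: "a \<in> Gc \<longleftrightarrow> (\<exists>k. a = P ^^ k)"
  unfolding cyc_def by auto

lemma id_G: "id \<in> Gc" unfolding G_iff by (intro exI[of _ 0]) simp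

lemma P_G: "P \<in> Gc" unfolding G_iff by (intro exI[of _ 1]) simp

lemma pow_G: "P ^^ k \<in> Gc" using G_iff by auto

lemma comp_G: "a \<in> Gc \<Longrightarrow> b \<in> Gc \<Longrightarrow> a \<circ> b \<in> Gc"
  unfolding G_iff by (metis funpow_add)

lemma G_add: "a \<in> Gc \<Longrightarrow> a (\<lambda>j. x j + y j) = (\<lambda>j. a x j + a y j)"
  unfolding G_iff using pow_add by auto
lemma G_diff: "a \<in> Gc \<Longrightarrow> a (\<lambda>j. x j - y j) = (\<lambda>j. a x j - a y j)"
  unfolding G_iff using pow_diff by auto
lemma G_smult: "a \<in> Gc \<Longrightarrow> a (\<lambda>j. c * x j) = (\<lambda>j. c * a x j)"
  unfolding G_iff using pow_smult by auto
lemma G_zero: "a \<in> Gc \<Longrightarrow> a (\<lambda>j. 0) = (\<lambda>j. 0)"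
  unfolding G_iff using pow_zero by auto
lemma G_pic: "a \<in> Gc \<Longrightarrow> x \<in> pic n \<Longrightarrow> a x \<in> pic n"
  unfolding G_iff using pow_pic by auto
lemma G_neg: "a \<in> Gc \<Longrightarrow> a (\<lambda>j. - x j) = (\<lambda>j. - a x j)"
  using G_smult[of a "-1" x] by simp

lemma cocD: "f \<in> cocycles n Gc \<Longrightarrow> a \<in> Gc \<Longrightarrow> b \<in> Gc \<Longrightarrow> f (a \<circ> b) = (\<lambda>j. f a j + a (f b) j)"
  unfolding cocycles_def by blast

lemma coc_pic: "f \<in> cocycles n Gc \<Longrightarrow> a \<in> Gc \<Longrightarrow> f a \<in> pic n"
  unfolding cocycles_def by auto

lemma coc_ext: "f \<in> cocycles n Gc \<Longrightarrow> a \<notin> Gc \<Longrightarrow> f a = undefined"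
  unfolding cocycles_def by auto

lemma coc_id: "f \<in> cocycles n Gc \<Longrightarrow> f id = (\<lambda>j. 0)"
proof -
  assume f: "f \<in> cocycles n Gc"
  have "f (id \<circ> id) = (\<lambda>j. f id j + id (f id) j)" by (rule cocD[OF f id_G id_G])
  then have "f id = (\<lambda>j. f id j + f id j)" by simp
  then show ?thesis by (metis add_cancel_left_right)
qed

lemma coc_pow: "f \<in> cocycles n Gc \<Longrightarrow> f (P ^^ Suc k) = (\<lambda>j. f P j + P (f (P ^^ k)) j)"
proof -
  assume f: "f \<in> cocycles n Gc"
  have "P ^^ Suc k = P \<circ> P ^^ k" by simp
  then show ?thesis using cocD[OF f P_G pow_G] by simp
qed

lemma vanish:
  assumes f: "f \<in> cocycles n Gc"
    and add: "\<And>a b. (L :: (int \<Rightarrow> int) \<Rightarrow> int) (\<lambda>j. a j + b j) = L a + L b" and z: "L (\<lambda>j. 0) = 0"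
    and inv: "\<And>y. y \<in> pic n \<Longrightarrow> L (P y) = L y"
  shows "L (f P) = 0"
proof -
  have k: "L (f (P ^^ k)) = int k * L (f P)" for k
  proof (induction k)
    case 0 then show ?case using coc_id[OF f, unfolded id_def] z by simp
  next
    case (Suc k)
    have "L (f (P ^^ Suc k)) = L (f P) + L (P (f (P ^^ k)))" unfolding coc_pow[OF f] add ..
    also have "\<dots> = L (f P) + L (f (P ^^ k))" using inv coc_pic[OF f pow_G] by simp
    also have "\<dots> = L (f P) + int k * L (f P)" using Suc.IH by simp
    also have "\<dots> = int (Suc k) * L (f P)" by (simp add: algebra_simps)
    finally show ?case .
  qed
  obtain a b where ab: "a < b" "P ^^ Suc a = P ^^ Suc b" using finite_order by blast
  have "int (Suc a) * L (f P) = int (Suc b) * L (f P)" using k[of "Suc a"] k[of "Suc b"] ab(2) by metis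
  then show ?thesis using ab(1) by simp
qed

lemma van_m1: "f \<in> cocycles n Gc \<Longrightarrow> f P (-1) = 0"
  using vanish[of f "\<lambda>y. y (-1)"] by (simp add: coord_m1)

lemma dd_add: "dd (\<lambda>j. a j + b j) = dd a + dd b"
  unfolding dd_def by (simp add: sum.distrib algebra_simps)
lemma dd_0: "dd (\<lambda>j. 0) = 0" unfolding dd_def by simp
lemma phi_add: "phi r (\<lambda>j. a j + b j) = phi r a + phi r b"
  unfolding phi_def by (simp add: sum.distrib algebra_simps)
lemma phi_0: "phi r (\<lambda>j. 0) = 0" unfolding phi_def by simp

lemma van_dd: "f \<in> cocycles n Gc \<Longrightarrow> dd (f P) = 0"
  by (rule vanish[OF _ dd_add dd_0 dd_inv])

lemma van_phi: "f \<in> cocycles n Gc \<Longrightarrow> r \<in> Reven \<Longrightarrow> phi r (f P) = 0"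
  by (rule vanish[OF _ phi_add phi_0 phi_inv])

lemma cob_pow: "f \<in> cocycles n Gc \<Longrightarrow> z \<in> pic n \<Longrightarrow> f P = (\<lambda>j. P z j - z j) \<Longrightarrow>
   f (P ^^ k) = (\<lambda>j. (P ^^ k) z j - z j)"
proof (induction k)
  case 0 then show ?case using coc_id[of f] by (simp add: id_def)
next
  case (Suc k)
  have "f (P ^^ Suc k) = (\<lambda>j. f P j + P (f (P ^^ k)) j)" by (rule coc_pow[OF Suc.prems(1)])
  also have "\<dots> = (\<lambda>j. P z j - z j + P (\<lambda>j. (P ^^ k) z j - z j) j)" using Suc by simp
  also have "\<dots> = (\<lambda>j. (P ^^ Suc k) z j - z j)" by (simp add: Phi_diff)
  finally show ?case .
qed

lemma cob_mem: "f \<in> cocycles n Gc \<Longrightarrow> z \<in> pic n \<Longrightarrow> f P = (\<lambda>j. P z j - z j) \<Longrightarrow> f \<in> coboundaries n Gc"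
proof -
  assume f: "f \<in> cocycles n Gc" and z: "z \<in> pic n" and fP: "f P = (\<lambda>j. P z j - z j)"
  have "f = (\<lambda>a\<in>Gc. (\<lambda>j. a z j - z j))"
  proof
    fix a
    show "f a = (\<lambda>a\<in>Gc. (\<lambda>j. a z j - z j)) a"
    proof (cases "a \<in> Gc")
      case True
      then obtain k where "a = P ^^ k" using G_iff by blast
      then show ?thesis using cob_pow[OF f z fP] True by simp
    next
      case False then show ?thesis using coc_ext[OF f] by simp
    qed
  qed
  then show ?thesis unfolding coboundaries_def using z by blast
qed

lemma cob_coc: "m \<in> pic n \<Longrightarrow> (\<lambda>a\<in>Gc. (\<lambda>j. a m j - m j)) \<in> cocycles n Gc"
  unfolding cocycles_def
proof (intro CollectI conjI ballI)
  assume m: "m \<in> pic n"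
  show "(\<lambda>a\<in>Gc. (\<lambda>j. a m j - m j)) \<in> Gc \<rightarrow>\<^sub>E pic n"
    using m G_pic pic_diff by auto
  fix a b assume a: "a \<in> Gc" and b: "b \<in> Gc"
  show "(\<lambda>a\<in>Gc. (\<lambda>j. a m j - m j)) (a \<circ> b) =
        (\<lambda>j. (\<lambda>a\<in>Gc. (\<lambda>j. a m j - m j)) a j + a ((\<lambda>a\<in>Gc. (\<lambda>j. a m j - m j)) b) j)"
    using a b comp_G[OF a b] by (simp add: G_diff[OF a])
qed

lemma cob_sub: "coboundaries n Gc \<subseteq> cocycles n Gc"
  unfolding coboundaries_def using cob_coc by blast

lemma half_pow:
  assumes z: "z \<in> pic n" and ev: "\<And>j. even (P z j - z j)"
  shows "\<exists>y\<in>pic n. (\<lambda>j. (P ^^ k) z j - z j) = (\<lambda>j. 2 * y j)"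
proof (induction k)
  case 0
  have "(\<lambda>j. 0::int) \<in> pic n" unfolding pic_def by simp
  then show ?case by (intro bexI[of _ "\<lambda>j. 0"]) auto
next
  case (Suc k)
  then obtain y where y: "y \<in> pic n" "(\<lambda>j. (P ^^ k) z j - z j) = (\<lambda>j. 2 * y j)" by blast
  define x where "x = (\<lambda>j. (P z j - z j) div 2)"
  have x2: "P z j - z j = 2 * x j" for j unfolding x_def using ev[of j] by simp
  have xp: "x \<in> pic n" unfolding x_def using z Phi_pic[of z] unfolding pic_def by auto
  have pk: "(P ^^ k) z = (\<lambda>j. z j + 2 * y j)" using y(2) by (metis add_diff_cancel_left' diff_add_cancel)
  have "(\<lambda>j. (P ^^ Suc k) z j - z j) = (\<lambda>j. P (\<lambda>j. z j + 2 * y j) j - z j)" using pk by simp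
  also have "\<dots> = (\<lambda>j. 2 * (x j + P y j))"
  proof
    fix j
    have "P (\<lambda>j. z j + 2 * y j) = (\<lambda>j. P z j + 2 * P y j)" by (simp only: Phi_add Phi_smult)
    then have e1: "P (\<lambda>j. z j + 2 * y j) j = P z j + 2 * P y j" by simp
    have e2: "P z j = 2 * x j + z j" using x2[of j] by simp
    show "P (\<lambda>j. z j + 2 * y j) j - z j = 2 * (x j + P y j)" unfolding e1 e2 by simp
  qed
  finally show ?case using xp y(1) Phi_pic by (intro bexI[of _ "\<lambda>j. x j + P y j"] pic_add) auto
qed

definition hcoc :: "(int \<Rightarrow> int) \<Rightarrow> (((int \<Rightarrow> int) \<Rightarrow> (int \<Rightarrow> int)) \<Rightarrow> (int \<Rightarrow> int))" where
  "hcoc z = (\<lambda>a\<in>Gc. (\<lambda>j. (a z j - z j) div 2))"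

lemma hcoc_mem:
  assumes z: "z \<in> pic n" and ev: "\<And>j. even (P z j - z j)"
  shows "hcoc z \<in> cocycles n Gc" "hcoc z P = (\<lambda>j. (P z j - z j) div 2)"
proof -
  have hv: "\<exists>y\<in>pic n. (\<lambda>j. a z j - z j) = (\<lambda>j. 2 * y j) \<and> hcoc z a = y" if a: "a \<in> Gc" for a
  proof -
    obtain k where k: "a = P ^^ k" using a G_iff by blast
    obtain y where y: "y \<in> pic n" "(\<lambda>j. (P ^^ k) z j - z j) = (\<lambda>j. 2 * y j)" using half_pow[OF z ev] by blast
    have "hcoc z a = y"
    proof
      fix j
      have "a z j - z j = 2 * y j" using y(2) k by metis
      then show "hcoc z a j = y j" unfolding hcoc_def using a by simp
    qed
    then show ?thesis using y k by blast
  qed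
  show "hcoc z \<in> cocycles n Gc" unfolding cocycles_def
  proof (intro CollectI conjI ballI)
    show "hcoc z \<in> Gc \<rightarrow>\<^sub>E pic n"
    proof
      fix a assume "a \<in> Gc" then show "hcoc z a \<in> pic n" using hv by blast
    next
      fix a assume "a \<notin> Gc" then show "hcoc z a = undefined" unfolding hcoc_def by simp
    qed
    fix a b assume a: "a \<in> Gc" and b: "b \<in> Gc"
    obtain ya where ya: "ya \<in> pic n" "(\<lambda>j. a z j - z j) = (\<lambda>j. 2 * ya j)" "hcoc z a = ya" using hv[OF a] by blast
    obtain yb where yb: "yb \<in> pic n" "(\<lambda>j. b z j - z j) = (\<lambda>j. 2 * yb j)" "hcoc z b = yb" using hv[OF b] by blast
    obtain yab where yab: "yab \<in> pic n" "(\<lambda>j. (a \<circ> b) z j - z j) = (\<lambda>j. 2 * yab j)" "hcoc z (a \<circ> b) = yab"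
      using hv[OF comp_G[OF a b]] by blast
    have "(\<lambda>j. 2 * a yb j) = a (\<lambda>j. 2 * yb j)" using G_smult[OF a] by simp
    also have "\<dots> = a (\<lambda>j. b z j - z j)" using yb(2) by simp
    also have "\<dots> = (\<lambda>j. a (b z) j - a z j)" using G_diff[OF a] by simp
    finally have e1: "(\<lambda>j. 2 * a yb j) = (\<lambda>j. a (b z) j - a z j)" .
    have ee: "(\<lambda>j. 2 * yab j) = (\<lambda>j. 2 * (ya j + a yb j))"
    proof
      fix j
      have "2 * yab j = a (b z) j - z j" using fun_cong[OF yab(2), of j] by simp
      moreover have "2 * ya j = a z j - z j" using fun_cong[OF ya(2), of j] by simp
      moreover have "2 * a yb j = a (b z) j - a z j" using fun_cong[OF e1, of j] by simp
      ultimately show "2 * yab j = 2 * (ya j + a yb j)" by (simp add: algebra_simps)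
    qed
    have "yab j = ya j + a yb j" for j using fun_cong[OF ee, of j] by simp
    then have "yab = (\<lambda>j. ya j + a yb j)" by (rule ext)
    then show "hcoc z (a \<circ> b) = (\<lambda>j. hcoc z a j + a (hcoc z b) j)" using ya yb yab by simp
  qed
  show "hcoc z P = (\<lambda>j. (P z j - z j) div 2)" unfolding hcoc_def using P_G by simp
qed

end

context wd begin

lemma cg_carrier: "carrier (cocycle_group n Gc) = cocycles n Gc"
  unfolding cocycle_group_def by simp
lemma cg_mult: "f \<otimes>\<^bsub>cocycle_group n Gc\<^esub> h = (\<lambda>a\<in>Gc. (\<lambda>j. f a j + h a j))"
  unfolding cocycle_group_def by simp
lemma cg_one: "\<one>\<^bsub>cocycle_group n Gc\<^esub> = (\<lambda>a\<in>Gc. (\<lambda>j. 0))"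
  unfolding cocycle_group_def by simp

lemma coc_add:
  assumes f: "f \<in> cocycles n Gc" and h: "h \<in> cocycles n Gc"
  shows "(\<lambda>a\<in>Gc. (\<lambda>j. f a j + h a j)) \<in> cocycles n Gc"
  unfolding cocycles_def
proof (intro CollectI conjI ballI)
  show "(\<lambda>a\<in>Gc. (\<lambda>j. f a j + h a j)) \<in> Gc \<rightarrow>\<^sub>E pic n"
    using coc_pic[OF f] coc_pic[OF h] pic_add by auto
  fix a b assume a: "a \<in> Gc" and b: "b \<in> Gc"
  show "(\<lambda>a\<in>Gc. (\<lambda>j. f a j + h a j)) (a \<circ> b) =
     (\<lambda>j. (\<lambda>a\<in>Gc. (\<lambda>j. f a j + h a j)) a j + a ((\<lambda>a\<in>Gc. (\<lambda>j. f a j + h a j)) b) j)"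
    using a b comp_G[OF a b] cocD[OF f a b] cocD[OF h a b] by (simp add: G_add[OF a] algebra_simps)
qed

lemma coc_neg:
  assumes f: "f \<in> cocycles n Gc"
  shows "(\<lambda>a\<in>Gc. (\<lambda>j. - f a j)) \<in> cocycles n Gc"
  unfolding cocycles_def
proof (intro CollectI conjI ballI)
  show "(\<lambda>a\<in>Gc. (\<lambda>j. - f a j)) \<in> Gc \<rightarrow>\<^sub>E pic n"
    using coc_pic[OF f] pic_smult[of _ "-1"] by auto
  fix a b assume a: "a \<in> Gc" and b: "b \<in> Gc"
  show "(\<lambda>a\<in>Gc. (\<lambda>j. - f a j)) (a \<circ> b) =
     (\<lambda>j. (\<lambda>a\<in>Gc. (\<lambda>j. - f a j)) a j + a ((\<lambda>a\<in>Gc. (\<lambda>j. - f a j)) b) j)"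
    using a b comp_G[OF a b] cocD[OF f a b] by (simp add: G_neg[OF a])
qed

lemma coc_zero: "(\<lambda>a\<in>Gc. (\<lambda>j. 0::int)) \<in> cocycles n Gc"
  unfolding cocycles_def
proof (intro CollectI conjI ballI)
  show "(\<lambda>a\<in>Gc. (\<lambda>j. 0::int)) \<in> Gc \<rightarrow>\<^sub>E pic n" unfolding pic_def by auto
  fix a b assume a: "a \<in> Gc" and b: "b \<in> Gc"
  show "(\<lambda>a\<in>Gc. (\<lambda>j. 0::int)) (a \<circ> b) = (\<lambda>j. (\<lambda>a\<in>Gc. (\<lambda>j. 0::int)) a j + a ((\<lambda>a\<in>Gc. (\<lambda>j. 0::int)) b) j)"
    using a b comp_G[OF a b] G_zero[OF a] by simp
qed

lemma coc_eqI: "f \<in> cocycles n Gc \<Longrightarrow> g \<in> cocycles n Gc \<Longrightarrow> (\<And>a. a \<in> Gc \<Longrightarrow> f a = g a) \<Longrightarrow> f = g"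
  using coc_ext by (metis ext)

lemma cg_comm_group: "comm_group (cocycle_group n Gc)"
proof (rule comm_groupI, unfold cg_carrier cg_mult cg_one)
  fix x y assume "x \<in> cocycles n Gc" "y \<in> cocycles n Gc"
  then show "(\<lambda>a\<in>Gc. (\<lambda>j. x a j + y a j)) \<in> cocycles n Gc" by (rule coc_add)
next
  show "(\<lambda>a\<in>Gc. (\<lambda>j. 0::int)) \<in> cocycles n Gc" by (rule coc_zero)
next
  fix x y z assume x: "x \<in> cocycles n Gc" and y: "y \<in> cocycles n Gc" and z: "z \<in> cocycles n Gc"
  show "(\<lambda>a\<in>Gc. (\<lambda>j. (\<lambda>a\<in>Gc. (\<lambda>j. x a j + y a j)) a j + z a j)) =
        (\<lambda>a\<in>Gc. (\<lambda>j. x a j + (\<lambda>a\<in>Gc. (\<lambda>j. y a j + z a j)) a j))"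
    by (rule restrict_ext) (simp add: algebra_simps)
next
  fix x y assume "x \<in> cocycles n Gc" "y \<in> cocycles n Gc"
  show "(\<lambda>a\<in>Gc. (\<lambda>j. x a j + y a j)) = (\<lambda>a\<in>Gc. (\<lambda>j. y a j + x a j))"
    by (rule restrict_ext) (simp add: algebra_simps)
next
  fix x assume x: "x \<in> cocycles n Gc"
  show "(\<lambda>a\<in>Gc. (\<lambda>j. (\<lambda>a\<in>Gc. (\<lambda>j. 0)) a j + x a j)) = x"
  proof (rule coc_eqI)
    show "(\<lambda>a\<in>Gc. (\<lambda>j. (\<lambda>a\<in>Gc. (\<lambda>j. 0::int)) a j + x a j)) \<in> cocycles n Gc"
      by (rule coc_add[OF coc_zero x])
  qed (use x in auto)
next
  fix x assume x: "x \<in> cocycles n Gc"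
  show "\<exists>y\<in>cocycles n Gc. (\<lambda>a\<in>Gc. (\<lambda>j. y a j + x a j)) = (\<lambda>a\<in>Gc. (\<lambda>j. 0))"
  proof (intro bexI)
    show "(\<lambda>a\<in>Gc. (\<lambda>j. (\<lambda>a\<in>Gc. (\<lambda>j. - x a j)) a j + x a j)) = (\<lambda>a\<in>Gc. (\<lambda>j. 0))"
      by (rule restrict_ext) simp
  qed (rule coc_neg[OF x])
qed

end

context wd begin

lemma R_fin: "finite R" using R_sub finite_subset by (metis finite_atLeastAtMost)

lemma orb_disj: "r \<in> R \<Longrightarrow> r' \<in> R \<Longrightarrow> r \<noteq> r' \<Longrightarrow> orb r \<inter> orb r' = {}"
proof (rule ccontr)
  assume r: "r \<in> R" and r': "r' \<in> R" and ne: "r \<noteq> r'" and "orb r \<inter> orb r' \<noteq> {}"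
  then obtain u where u: "u \<in> orb r" "u \<in> orb r'" by blast
  have "orb u = orb r" using orb_eq[OF R_in[OF r] u(1)] .
  moreover have "orb u = orb r'" using orb_eq[OF R_in[OF r'] u(2)] .
  ultimately have "r' \<in> orb r" using orb_self by metis
  then show False using R_uniq[OF r r' R_in[OF r] orb_self] ne by blast
qed

lemma orb_union: "\<Union>(orb ` R) = {1..n}"
proof
  show "\<Union>(orb ` R) \<subseteq> {1..n}" using orb_sub R_in by blast
  show "{1..n} \<subseteq> \<Union>(orb ` R)"
  proof
    fix u assume u: "u \<in> {1..n}"
    have "orb (rep u) = orb u" using orb_eq[OF u rep_orb] .
    then have "u \<in> orb (rep u)" using orb_self by metis
    then show "u \<in> \<Union>(orb ` R)" using rep_R[OF u] by blast
  qed
qed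

lemma sum_part: "(\<Sum>u\<in>{1..n}. g u) = (\<Sum>r\<in>R. \<Sum>u\<in>orb r. g u)"
proof -
  have "(\<Sum>u\<in>\<Union>(orb ` R). g u) = (\<Sum>r\<in>R. \<Sum>u\<in>orb r. g u)"
    by (rule sum.UNION_disjoint) (use R_fin orb_fin R_in orb_disj in auto)
  then show ?thesis using orb_union by simp
qed

lemma card_part: "card S = (\<Sum>r\<in>R. card (S \<inter> orb r))"
proof -
  have "S = (\<Union>r\<in>R. S \<inter> orb r)" using orb_union Ssub by blast
  moreover have "card (\<Union>r\<in>R. S \<inter> orb r) = (\<Sum>r\<in>R. card (S \<inter> orb r))"
  proof (rule card_UN_disjoint)
    show "finite R" by (rule R_fin)
    show "\<forall>r\<in>R. finite (S \<inter> orb r)" using finS by blast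
    show "\<forall>r\<in>R. \<forall>r'\<in>R. r \<noteq> r' \<longrightarrow> S \<inter> orb r \<inter> (S \<inter> orb r') = {}"
      using orb_disj by blast
  qed
  ultimately show ?thesis by simp
qed

lemma Rodd_even: "even (card Rodd)"
proof -
  have "even (card {r\<in>R. odd (card (S \<inter> orb r))})"
    using even_sum_iff[OF R_fin, of "\<lambda>r. card (S \<inter> orb r)"] card_part Seven by simp
  then show ?thesis unfolding Rodd_def .
qed

lemma Lambda_eq: "Lambda n \<tau> S = card Rodd"
proof -
  have tc: "tau_cycles n \<tau> = orb ` {1..n}" unfolding tau_cycles_def orb_def[abs_def] ..
  have "{\<gamma> \<in> orb ` {1..n}. odd (card (S \<inter> \<gamma>))} = orb ` Rodd"
  proof
    show "{\<gamma> \<in> orb ` {1..n}. odd (card (S \<inter> \<gamma>))} \<subseteq> orb ` Rodd"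
    proof
      fix \<gamma> assume "\<gamma> \<in> {\<gamma> \<in> orb ` {1..n}. odd (card (S \<inter> \<gamma>))}"
      then obtain i where i: "i \<in> {1..n}" "\<gamma> = orb i" "odd (card (S \<inter> \<gamma>))" by blast
      have "orb (rep i) = orb i" using orb_eq[OF i(1) rep_orb] .
      then have "rep i \<in> Rodd" using rep_R[OF i(1)] i unfolding Rodd_def by simp
      then show "\<gamma> \<in> orb ` Rodd" using i(2) \<open>orb (rep i) = orb i\<close> by (metis image_eqI)
    qed
    show "orb ` Rodd \<subseteq> {\<gamma> \<in> orb ` {1..n}. odd (card (S \<inter> \<gamma>))}"
      unfolding Rodd_def using R_in by blast
  qed
  moreover have "inj_on orb Rodd"
  proof
    fix r r' assume r: "r \<in> Rodd" and r': "r' \<in> Rodd" and e: "orb r = orb r'"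
    have "r \<in> R" "r' \<in> R" using r r' Rodd_sub by auto
    moreover have "r' \<in> orb r" using e orb_self by metis
    ultimately show "r = r'" using R_uniq[of r r' r] R_in orb_self by blast
  qed
  ultimately show ?thesis unfolding Lambda_def tc by (simp add: card_image)
qed

definition Sx :: "nat \<Rightarrow> (int \<Rightarrow> int) \<Rightarrow> int" where
  "Sx r x = (\<Sum>u\<in>orb r. x (int u))"

lemma Sx_even: "r \<in> Reven \<Longrightarrow> phi r x = 0 \<Longrightarrow> even (Sx r x)"
proof -
  assume r: "r \<in> Reven" and p: "phi r x = 0"
  have "Sx r x = Sx r x - phi r x" using p by simp
  also have "\<dots> = (\<Sum>u\<in>orb r. (1 - th u) * x (int u))"
    unfolding Sx_def phi_def by (simp add: sum_subtractf algebra_simps)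
  finally have e: "Sx r x = (\<Sum>u\<in>orb r. (1 - th u) * x (int u))" .
  have "even ((1 - th u) * x (int u))" for u using th_pm[of u] by auto
  then have "even (\<Sum>u\<in>orb r. (1 - th u) * x (int u))" by (simp add: dvd_sum)
  then show ?thesis using e by simp
qed

lemma weight:
  assumes d: "dd x = 0" and p: "\<forall>r\<in>Reven. phi r x = 0"
  shows "even (card {r \<in> Rodd. odd (Sx r x)})"
proof -
  have "(\<Sum>u\<in>{1..n}. x (int u)) = - 2 * x 0" using d unfolding dd_def by simp
  then have "even (\<Sum>r\<in>R. Sx r x)" unfolding Sx_def sum_part[symmetric] by simp
  then have "even (card {r\<in>R. odd (Sx r x)})" using even_sum_iff[OF R_fin, of "\<lambda>r. Sx r x"] by simp
  moreover have "{r\<in>R. odd (Sx r x)} = {r \<in> Rodd. odd (Sx r x)}"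
    using Sx_even p R_split Rodd_sub by blast
  ultimately show ?thesis by simp
qed

end

context wd begin

abbreviation Lm where "Lm \<equiv> card Rodd - 2"

abbreviation TT where "TT \<equiv> product_group {..<Lm} (\<lambda>_. integer_mod_group 2)"

definition hh :: "(nat \<Rightarrow> nat) \<Rightarrow> (((int \<Rightarrow> int) \<Rightarrow> (int \<Rightarrow> int)) \<Rightarrow> (int \<Rightarrow> int)) \<Rightarrow> nat \<Rightarrow> int" where
  "hh e f = (\<lambda>i\<in>{..<Lm}. (Sx (e i) (f P) + Sx (e Lm) (f P)) mod 2)"

lemma TT_carrier: "carrier TT = {..<Lm} \<rightarrow>\<^sub>E {0..<2}"
  by (simp add: carrier_integer_mod_group)

lemma TT_mult: "x \<otimes>\<^bsub>TT\<^esub> y = (\<lambda>i\<in>{..<Lm}. (x i + y i) mod 2)"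
  by (simp add: integer_mod_group_def)

lemma TT_one: "\<one>\<^bsub>TT\<^esub> = (\<lambda>i\<in>{..<Lm}. 0)"
  by (simp add: integer_mod_group_def)

lemma TT_group: "group TT" by (rule product_group) simp

lemma cg_group: "group (cocycle_group n Gc)"
  using cg_comm_group comm_group.axioms(2) by blast

lemma Sx_add: "Sx r (\<lambda>j. a j + b j) = Sx r a + Sx r b"
  unfolding Sx_def by (simp add: sum.distrib)

lemma Sx_diff: "Sx r (\<lambda>j. a j - b j) = Sx r a - Sx r b"
  unfolding Sx_def by (simp add: sum_subtractf)

lemma hh_hom: "group_hom (cocycle_group n Gc) TT (hh e)"
proof (rule group_hom.intro[OF cg_group TT_group], rule group_hom_axioms.intro, rule homI)
  fix f assume "f \<in> carrier (cocycle_group n Gc)"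
  show "hh e f \<in> carrier TT" unfolding TT_carrier hh_def by auto
next
  fix f g assume f: "f \<in> carrier (cocycle_group n Gc)" and g: "g \<in> carrier (cocycle_group n Gc)"
  have fg: "(f \<otimes>\<^bsub>cocycle_group n Gc\<^esub> g) P = (\<lambda>j. f P j + g P j)"
    unfolding cg_mult using P_G by simp
  show "hh e (f \<otimes>\<^bsub>cocycle_group n Gc\<^esub> g) = hh e f \<otimes>\<^bsub>TT\<^esub> hh e g"
    unfolding TT_mult hh_def fg Sx_add
  proof (rule restrict_ext)
    fix i assume "i \<in> {..<Lm}"
    then show "(Sx (e i) (f P) + Sx (e i) (g P) + (Sx (e Lm) (f P) + Sx (e Lm) (g P))) mod 2 =
      ((\<lambda>i\<in>{..<Lm}. (Sx (e i) (f P) + Sx (e Lm) (f P)) mod 2) i +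
       (\<lambda>i\<in>{..<Lm}. (Sx (e i) (g P) + Sx (e Lm) (g P)) mod 2) i) mod 2"
      by (simp add: mod_add_eq algebra_simps)
  qed
qed

lemma parity_odd: "r \<in> Rodd \<Longrightarrow> \<exists>k. Sx r (\<lambda>j. P y j - y j) = y (-1) + 2 * k"
proof -
  assume r: "r \<in> Rodd"
  have rR: "r \<in> R" using r Rodd_sub by blast
  obtain k where k: "(\<Sum>u\<in>orb r. P y (int u) - y (int u)) = - y (-1) * int (card (S \<inter> orb r)) + 2 * k"
    using parity[OF R_in[OF rR]] by blast
  obtain q where q: "card (S \<inter> orb r) = 2 * q + 1" using r unfolding Rodd_def by (auto elim!: oddE)
  have "Sx r (\<lambda>j. P y j - y j) = y (-1) + 2 * (k - y (-1) - y (-1) * int q)"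
    unfolding Sx_def using k q by (simp add: algebra_simps)
  then show ?thesis by blast
qed

lemma ker_cob:
  assumes f: "f \<in> cocycles n Gc"
    and const: "\<forall>r\<in>Rodd. \<forall>r'\<in>Rodd. odd (Sx r (f P)) \<longleftrightarrow> odd (Sx r' (f P))"
  shows "f \<in> coboundaries n Gc"
proof -
  define x where "x = f P"
  have xp: "x \<in> pic n" unfolding x_def using coc_pic[OF f P_G] .
  have xm: "x (-1) = 0" unfolding x_def using van_m1[OF f] .
  have xd: "dd x = 0" unfolding x_def using van_dd[OF f] .
  have xph: "\<forall>r\<in>Reven. phi r x = 0" unfolding x_def using van_phi[OF f] by blast
  show ?thesis
  proof (cases "\<forall>r\<in>Rodd. even (Sx r x)")
    case True
    then obtain z where z: "z \<in> pic n" "x = (\<lambda>j. P z j - z j)"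
      using kerB[OF xp xm xd xph] unfolding Sx_def by blast
    show ?thesis by (rule cob_mem[OF f z(1)]) (use z(2) x_def in simp)
  next
    case False
    then obtain r0 where r0: "r0 \<in> Rodd" "odd (Sx r0 x)" by blast
    define l where "l = basis_l (-1)"
    have lp: "l \<in> pic n" unfolding l_def by (rule basis_pic) simp
    define x' where "x' = (\<lambda>j. x j - (P l j - l j))"
    have x'p: "x' \<in> pic n" unfolding x'_def by (intro pic_diff xp Phi_pic lp)
    have x'm: "x' (-1) = 0" unfolding x'_def using xm by (simp add: coord_m1)
    have x'd: "dd x' = 0" unfolding x'_def dd_diff dd_inv using xd by simp
    have x'ph: "\<forall>r\<in>Reven. phi r x' = 0" unfolding x'_def phi_diff using xph phi_inv by simp
    have x'o: "\<forall>r\<in>Rodd. even (\<Sum>u\<in>orb r. x' (int u))"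
    proof
      fix r assume r: "r \<in> Rodd"
      have ox: "odd (Sx r x)" using const r r0 unfolding x_def by blast
      obtain k where k: "Sx r (\<lambda>j. P l j - l j) = l (-1) + 2 * k" using parity_odd[OF r] by blast
      have "Sx r x' = Sx r x - Sx r (\<lambda>j. P l j - l j)" unfolding x'_def by (rule Sx_diff)
      also have "\<dots> = Sx r x - (l (-1) + 2 * k)" unfolding k ..
      also have "l (-1) = 1" unfolding l_def basis_l_def by simp
      finally have "Sx r x' = Sx r x - (1 + 2 * k)" .
      then show "even (\<Sum>u\<in>orb r. x' (int u))" using ox unfolding Sx_def by simp
    qed
    obtain z where z: "z \<in> pic n" "x' = (\<lambda>j. P z j - z j)" using kerB[OF x'p x'm x'd x'ph x'o] by blast
    define z' where "z' = (\<lambda>j. z j + l j)"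
    have z'p: "z' \<in> pic n" unfolding z'_def by (intro pic_add z(1) lp)
    have "f P = (\<lambda>j. P z' j - z' j)"
    proof
      fix j
      have "x' j = P z j - z j" using z(2) by simp
      then show "f P j = P z' j - z' j" unfolding z'_def Phi_add x'_def x_def by simp
    qed
    then show ?thesis by (rule cob_mem[OF f z'p])
  qed
qed

end

context wd begin

lemma hh_one_iff: "hh e f = \<one>\<^bsub>TT\<^esub> \<longleftrightarrow> (\<forall>i<Lm. (Sx (e i) (f P) + Sx (e Lm) (f P)) mod 2 = 0)"
proof
  assume h: "hh e f = \<one>\<^bsub>TT\<^esub>"
  show "\<forall>i<Lm. (Sx (e i) (f P) + Sx (e Lm) (f P)) mod 2 = 0"
  proof (intro allI impI)
    fix i assume i: "i < Lm"
    have "hh e f i = \<one>\<^bsub>TT\<^esub> i" using h by simp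
    then show "(Sx (e i) (f P) + Sx (e Lm) (f P)) mod 2 = 0" using i unfolding hh_def TT_one by simp
  qed
next
  assume h: "\<forall>i<Lm. (Sx (e i) (f P) + Sx (e Lm) (f P)) mod 2 = 0"
  show "hh e f = \<one>\<^bsub>TT\<^esub>" unfolding hh_def TT_one
    by (rule restrict_ext) (use h in simp)
qed

lemma ker_sub:
  assumes e: "bij_betw e {..<card Rodd} Rodd" and f: "f \<in> cocycles n Gc" and h: "hh e f = \<one>\<^bsub>TT\<^esub>"
  shows "f \<in> coboundaries n Gc"
proof (rule ker_cob[OF f])
  define x where "x = f P"
  define L where "L = card Rodd"
  have eR: "e i \<in> Rodd" if "i < L" for i using bij_betw_apply[OF e] that unfolding L_def by auto
  have einj: "inj_on e {..<L}" using e bij_betw_imp_inj_on unfolding L_def by blast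
  have esurj: "e ` {..<L} = Rodd" using e bij_betw_imp_surj_on unfolding L_def by blast
  show "\<forall>r\<in>Rodd. \<forall>r'\<in>Rodd. odd (Sx r (f P)) \<longleftrightarrow> odd (Sx r' (f P))"
  proof (cases "Rodd = {}")
    case True then show ?thesis by simp
  next
    case False
    then have "L \<noteq> 0" unfolding L_def using Rodd_fin by simp
    moreover have "even L" unfolding L_def by (rule Rodd_even)
    ultimately have L2: "2 \<le> L" by presburger
    define m where "m = L - 2"
    have m: "L = Suc (Suc m)" "even m" using L2 \<open>even L\<close> unfolding m_def by presburger+
    have Lm: "Lm = m" using m(1) unfolding L_def by simp
    define c where "c = odd (Sx (e m) x)"
    define d where "d = odd (Sx (e (Suc m)) x)"
    have lt: "i < m \<Longrightarrow> odd (Sx (e i) x) \<longleftrightarrow> c" for i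
    proof -
      assume i: "i < m"
      have hz: "\<forall>i<Lm. (Sx (e i) (f P) + Sx (e Lm) (f P)) mod 2 = 0" by (rule hh_one_iff[THEN iffD1, OF h])
      have "i < Lm" using i Lm by simp
      then have "(Sx (e i) (f P) + Sx (e Lm) (f P)) mod 2 = 0" using hz by blast
      then have "(Sx (e i) x + Sx (e m) x) mod 2 = 0" unfolding x_def Lm .
      then show ?thesis unfolding c_def by presburger
    qed
    have w: "even (card {r \<in> Rodd. odd (Sx r x)})"
      using weight[OF van_dd[OF f]] van_phi[OF f] unfolding x_def by blast
    define Z where "Z = {i\<in>{..<L}. odd (Sx (e i) x)}"
    have "{r \<in> Rodd. odd (Sx r x)} = e ` Z" unfolding Z_def using esurj by auto
    moreover have "card (e ` Z) = card Z" using einj unfolding Z_def by (intro card_image) (auto intro: inj_on_subset)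
    ultimately have wZ: "even (card Z)" using w by simp
    have Zeq: "Z = (if c then {..<Suc m} else {}) \<union> (if d then {Suc m} else {})"
    proof
      show "Z \<subseteq> (if c then {..<Suc m} else {}) \<union> (if d then {Suc m} else {})"
      proof
        fix i assume "i \<in> Z"
        then have i: "i < Suc (Suc m)" "odd (Sx (e i) x)" unfolding Z_def m(1) by auto
        then consider "i < m" | "i = m" | "i = Suc m" by linarith
        then show "i \<in> (if c then {..<Suc m} else {}) \<union> (if d then {Suc m} else {})"
          by cases (use i lt c_def d_def in auto)
      qed
      show "(if c then {..<Suc m} else {}) \<union> (if d then {Suc m} else {}) \<subseteq> Z"
      proof
        fix i assume i: "i \<in> (if c then {..<Suc m} else {}) \<union> (if d then {Suc m} else {})"
        then have "i < Suc m \<and> c \<or> i = Suc m \<and> d" by (auto split: if_splits)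
        then show "i \<in> Z"
        proof
          assume a: "i < Suc m \<and> c"
          then have "i < m \<or> i = m" by auto
          then show "i \<in> Z" using a lt c_def unfolding Z_def m(1) by auto
        next
          assume "i = Suc m \<and> d"
          then show "i \<in> Z" using d_def unfolding Z_def m(1) by auto
        qed
      qed
    qed
    have "card Z = (if c then Suc m else 0) + (if d then 1 else 0)"
      unfolding Zeq by (auto simp: card_Un_disjoint)
    then have cd: "c \<longleftrightarrow> d" using wZ m(2) by (auto split: if_splits)
    have all: "odd (Sx r x) \<longleftrightarrow> c" if r: "r \<in> Rodd" for r
    proof -
      obtain i where i: "i < L" "r = e i" using r esurj by auto
      then consider "i < m" | "i = m" | "i = Suc m" using m(1) by linarith
      then show ?thesis by cases (use i lt c_def d_def cd in auto)
    qed
    show ?thesis using all unfolding x_def by blast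
  qed
qed

lemma ker_sup:
  assumes e: "bij_betw e {..<card Rodd} Rodd" and f: "f \<in> coboundaries n Gc"
  shows "hh e f = \<one>\<^bsub>TT\<^esub>"
proof -
  obtain m' where m': "m' \<in> pic n" "f = (\<lambda>a\<in>Gc. (\<lambda>j. a m' j - m' j))"
    using f unfolding coboundaries_def by blast
  have fP: "f P = (\<lambda>j. P m' j - m' j)" using m'(2) P_G by simp
  show ?thesis unfolding hh_one_iff
  proof (intro allI impI)
    fix i assume i: "i < Lm"
    have eR: "e k \<in> Rodd" if "k < card Rodd" for k using bij_betw_apply[OF e] that by auto
    have "e i \<in> Rodd" "e Lm \<in> Rodd" using i by (auto intro!: eR)
    then obtain k1 k2 where "Sx (e i) (f P) = m' (-1) + 2 * k1" "Sx (e Lm) (f P) = m' (-1) + 2 * k2"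
      unfolding fP using parity_odd by metis
    then show "(Sx (e i) (f P) + Sx (e Lm) (f P)) mod 2 = 0" by simp
  qed
qed

lemma kernel_eq:
  assumes e: "bij_betw e {..<card Rodd} Rodd"
  shows "kernel (cocycle_group n Gc) TT (hh e) = coboundaries n Gc"
  unfolding kernel_def cg_carrier
  using ker_sub[OF e] ker_sup[OF e] cob_sub by blast

end

context wd begin

lemma mod2_lemma: "even (b::int) \<Longrightarrow> (odd a \<longleftrightarrow> t = 1) \<Longrightarrow> (t = 0 \<or> t = 1) \<Longrightarrow> (a + b) mod 2 = t"
  by presburger

lemma hh_surj:
  assumes e: "bij_betw e {..<card Rodd} Rodd"
  shows "hh e ` cocycles n Gc = carrier TT"
proof
  show "hh e ` cocycles n Gc \<subseteq> carrier TT" unfolding TT_carrier hh_def by auto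
  show "carrier TT \<subseteq> hh e ` cocycles n Gc"
  proof
    fix t assume t: "t \<in> carrier TT"
    then have tP: "t \<in> {..<Lm} \<rightarrow>\<^sub>E {0..<2}" unfolding TT_carrier .
    show "t \<in> hh e ` cocycles n Gc"
    proof (cases "Lm = 0")
      case True
      then have "t = (\<lambda>_. undefined)" using tP by auto
      moreover have "hh e (\<lambda>a\<in>Gc. (\<lambda>j. 0)) = (\<lambda>_. undefined)" unfolding hh_def True by auto
      ultimately show ?thesis using coc_zero by (metis image_eqI)
    next
      case False
      define m where "m = Lm"
      define L where "L = card Rodd"
      have Lm: "L = Suc (Suc m)" using False unfolding m_def L_def by simp
      have eR: "e i \<in> Rodd" if "i < L" for i using bij_betw_apply[OF e] that unfolding L_def by auto
      have einj: "inj_on e {..<L}" using e bij_betw_imp_inj_on unfolding L_def by blast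
      define J where "J = {i \<in> {..<m}. t i = 1}"
      define V where "V = e ` J \<union> (if odd (card J) then {e (Suc m)} else {})"
      have Jsub: "J \<subseteq> {..<L}" unfolding J_def Lm by auto
      have finJ: "finite J" unfolding J_def by simp
      have VR: "V \<subseteq> Rodd" unfolding V_def using eR Jsub Lm by auto
      have VR2: "V \<subseteq> R" using VR Rodd_sub by blast
      have notJ: "e (Suc m) \<notin> e ` J"
      proof
        assume "e (Suc m) \<in> e ` J"
        then obtain i where i: "i \<in> J" "e (Suc m) = e i" by auto
        have "Suc m = i" using inj_onD[OF einj i(2)] i(1) Jsub Lm by auto
        then show False using i(1) unfolding J_def by auto
      qed
      have em: "e m \<notin> V"
      proof
        assume "e m \<in> V"
        then consider "e m \<in> e ` J" | "e m = e (Suc m)" unfolding V_def by (auto split: if_splits)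
        then show False
        proof cases
          case 1
          then obtain i where i: "i \<in> J" "e m = e i" by auto
          have "m = i" using inj_onD[OF einj i(2)] i(1) Jsub Lm by auto
          then show False using i(1) unfolding J_def by auto
        next
          case 2
          then show False using inj_onD[OF einj 2] Lm by auto
        qed
      qed
      have eiV: "e i \<in> V \<longleftrightarrow> t i = 1" if i: "i < m" for i
      proof
        assume "e i \<in> V"
        then consider "e i \<in> e ` J" | "e i = e (Suc m)" unfolding V_def by (auto split: if_splits)
        then show "t i = 1"
        proof cases
          case 1
          then obtain k where k: "k \<in> J" "e i = e k" by auto
          have "i = k" using inj_onD[OF einj k(2)] k(1) Jsub Lm i by auto
          then show ?thesis using k(1) unfolding J_def by auto
        next
          case 2
          then show ?thesis using inj_onD[OF einj 2] Lm i by auto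
        qed
      next
        assume "t i = 1"
        then show "e i \<in> V" using i unfolding V_def J_def by auto
      qed
      have cardV: "even (card V)"
      proof (cases "odd (card J)")
        case True
        then have "card V = Suc (card (e ` J))" unfolding V_def using notJ finJ by simp
        also have "card (e ` J) = card J" using einj Jsub by (intro card_image) (auto intro: inj_on_subset)
        finally show ?thesis using True by simp
      next
        case False
        then have "card V = card (e ` J)" unfolding V_def by simp
        also have "card (e ` J) = card J" using einj Jsub by (intro card_image) (auto intro: inj_on_subset)
        finally show ?thesis using False by simp
      qed
      have finV: "finite V" using VR Rodd_fin finite_subset by blast
      define A where "A = \<Union>(orb ` V)"
      have Asub: "A \<subseteq> {1..n}" unfolding A_def using VR2 orb_sub R_in by blast
      have Atau: "\<tau> u \<in> A \<longleftrightarrow> u \<in> A" for u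
        unfolding A_def using orb_tau_iff VR2 R_in by blast
      define z where "z = (\<lambda>j. if j \<in> int ` A then 1 else (0::int))"
      have zu: "z (int u) = (if u \<in> A then 1 else 0)" for u unfolding z_def by auto
      have zm: "z (-1) = 0" unfolding z_def by auto
      have z0: "z 0 = 0" unfolding z_def using Asub by auto
      have zp: "z \<in> pic n" unfolding pic_def z_def using Asub by force
      have Du: "P z (int u) - z (int u) = (if u \<in> A \<and> u \<in> S then -2 else 0)" if u: "u \<in> {1..n}" for u
        using coord_pos'[OF u, of z] zm zu[of u] zu[of "\<tau> u"] Atau[of u] by (auto simp: eps_def)
      have cardSA: "card (S \<inter> A) = (\<Sum>r\<in>V. card (S \<inter> orb r))"
      proof -
        have "S \<inter> A = (\<Union>r\<in>V. S \<inter> orb r)" unfolding A_def by blast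
        moreover have "card (\<Union>r\<in>V. S \<inter> orb r) = (\<Sum>r\<in>V. card (S \<inter> orb r))"
        proof (rule card_UN_disjoint)
          show "finite V" by (rule finV)
          show "\<forall>r\<in>V. finite (S \<inter> orb r)" using finS by blast
          show "\<forall>r\<in>V. \<forall>r'\<in>V. r \<noteq> r' \<longrightarrow> S \<inter> orb r \<inter> (S \<inter> orb r') = {}"
            using orb_disj VR2 by blast
        qed
        ultimately show ?thesis by simp
      qed
      have evSA: "even (card (S \<inter> A))"
      proof -
        have "{r \<in> V. odd (card (S \<inter> orb r))} = V" using VR unfolding Rodd_def by auto
        then show ?thesis unfolding cardSA using even_sum_iff[OF finV, of "\<lambda>r. card (S \<inter> orb r)"] cardV by simp
      qed
      have D0: "P z 0 - z 0 = int (card (S \<inter> A))"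
      proof -
        have "(\<Sum>u\<in>S. z (int (\<tau> u))) = (\<Sum>u\<in>S. if u \<in> A then 1 else 0)"
          by (rule sum.cong) (auto simp: zu Atau)
        also have "\<dots> = (\<Sum>u\<in>S \<inter> A. 1)" by (rule sum.inter_restrict[OF finS, symmetric])
        also have "\<dots> = int (card (S \<inter> A))" by simp
        finally show ?thesis by (simp add: coord_0 zm z0)
      qed
      have evD: "even (P z j - z j)" for j
      proof (cases "j \<in> {-1..int n}")
        case False
        then show ?thesis using zp Phi_pic[of z] unfolding pic_def by auto
      next
        case True
        show ?thesis
        proof (cases "j = -1 \<or> j = 0")
          case True then show ?thesis using zm z0 D0 evSA by (auto simp: coord_m1)
        next
          case False
          then have jj: "nat j \<in> {1..n}" "j = int (nat j)" using \<open>j \<in> {-1..int n}\<close> by auto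
          have "P z (int (nat j)) - z (int (nat j)) = (if nat j \<in> A \<and> nat j \<in> S then -2 else 0)"
            by (rule Du[OF jj(1)])
          then show ?thesis using jj(2) by (metis dvd_0_right even_minus even_numeral)
        qed
      qed
      define f where "f = hcoc z"
      have fc: "f \<in> cocycles n Gc" unfolding f_def using hcoc_mem[OF zp evD] by blast
      have fP: "f P = (\<lambda>j. (P z j - z j) div 2)" unfolding f_def using hcoc_mem[OF zp evD] by blast
      have Sxf: "odd (Sx r (f P)) \<longleftrightarrow> r \<in> V" if r: "r \<in> Rodd" for r
      proof -
        have rR: "r \<in> R" using r Rodd_sub by blast
        have ri: "r \<in> {1..n}" using R_in[OF rR] .
        have "Sx r (f P) = (\<Sum>u\<in>orb r. if u \<in> A \<and> u \<in> S then -1 else 0)"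
          unfolding Sx_def fP
        proof (rule sum.cong[OF refl])
          fix u assume "u \<in> orb r"
          then have u: "u \<in> {1..n}" by (rule orb_in[OF ri])
          show "(P z (int u) - z (int u)) div 2 = (if u \<in> A \<and> u \<in> S then -1 else 0)"
            unfolding Du[OF u] by simp
        qed
        also have "\<dots> = (if r \<in> V then - int (card (S \<inter> orb r)) else 0)"
        proof (cases "r \<in> V")
          case True
          then have "orb r \<subseteq> A" unfolding A_def by blast
          then have "(\<Sum>u\<in>orb r. if u \<in> A \<and> u \<in> S then -1 else 0) = (\<Sum>u\<in>orb r. - ind u)"
            by (intro sum.cong) (auto simp: ind_def)
          also have "\<dots> = - int (card (S \<inter> orb r))" using sum_ind[OF orb_fin[OF ri]] by (simp add: sum_negf)
          finally show ?thesis using True by simp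
        next
          case False
          have "u \<notin> A" if "u \<in> orb r" for u
          proof
            assume "u \<in> A"
            then obtain r' where r': "r' \<in> V" "u \<in> orb r'" unfolding A_def by blast
            have "r' \<noteq> r" using r'(1) False by blast
            then show False using orb_disj[OF rR, of r'] VR2 r' that by blast
          qed
          then show ?thesis using False by (auto intro!: sum.neutral)
        qed
        finally show ?thesis using r unfolding Rodd_def by auto
      qed
      have "hh e f = t"
      proof
        fix i
        show "hh e f i = t i"
        proof (cases "i < m")
          case True
          have mL: "m < L" using Lm by simp
          have iL: "i < L" using Lm True by simp
          have a: "even (Sx (e m) (f P))" using Sxf[OF eR[OF mL]] em by simp
          have b: "odd (Sx (e i) (f P)) \<longleftrightarrow> t i = 1" using Sxf[OF eR[OF iL]] eiV[OF True] by simp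
          have "t i \<in> {0..<2}" by (rule PiE_mem[OF tP]) (use True m_def in simp)
          then have c: "t i = 0 \<or> t i = 1" by auto
          have "hh e f i = (Sx (e i) (f P) + Sx (e m) (f P)) mod 2"
            unfolding hh_def m_def[symmetric] using True by simp
          then show ?thesis using mod2_lemma[OF a b c] by simp
        next
          case False
          then have "i \<notin> {..<Lm}" unfolding m_def by simp
          then have "t i = undefined" "hh e f i = undefined" using PiE_arb[OF tP] unfolding hh_def by auto
          then show ?thesis by simp
        qed
      qed
      then show ?thesis using fc by blast
    qed
  qed
qed

end

theorem proposition4p1:
  fixes n :: nat and \<tau> :: "nat \<Rightarrow> nat" and S :: "nat set"
  assumes "in_WD n \<tau> S"
  shows "(Lambda n \<tau> S = 0 \<or> Lambda n \<tau> S = 2 \<longrightarrow> trivial_group (H1 n (cyc n \<tau> S)))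
       \<and> (\<not> (Lambda n \<tau> S = 0 \<or> Lambda n \<tau> S = 2) \<longrightarrow>
            H1 n (cyc n \<tau> S) \<cong> product_group {..<Lambda n \<tau> S - 2} (\<lambda>_. integer_mod_group 2))"
proof -
  interpret W: wd n \<tau> S by (rule wd.intro) (rule assms)
  have LE: "Lambda n \<tau> S = card W.Rodd" by (rule W.Lambda_eq)
  obtain e where e: "bij_betw e {..<card W.Rodd} W.Rodd"
    using ex_bij_betw_nat_finite[OF W.Rodd_fin] by (auto simp: atLeast0LessThan)
  interpret gh: group_hom "cocycle_group n (cyc n \<tau> S)" W.TT "W.hh e" by (rule W.hh_hom)
  have iso: "H1 n (cyc n \<tau> S) \<cong> W.TT"
    unfolding H1_def using gh.FactGroup_iso[OF W.hh_surj[OF e, folded W.cg_carrier]] W.kernel_eq[OF e] by simp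
  have grpH: "group (H1 n (cyc n \<tau> S))"
    unfolding H1_def using normal.factorgroup_is_group[OF gh.normal_kernel] W.kernel_eq[OF e] by simp
  show ?thesis
  proof (intro conjI impI)
    assume "Lambda n \<tau> S = 0 \<or> Lambda n \<tau> S = 2"
    then have "card W.Rodd - 2 = 0" using LE by auto
    then have "trivial_group W.TT" by (simp add: trivial_product_group)
    then show "trivial_group (H1 n (cyc n \<tau> S))"
      using isomorphic_group_triviality[OF iso grpH W.TT_group] by simp
  next
    show "H1 n (cyc n \<tau> S) \<cong> product_group {..<Lambda n \<tau> S - 2} (\<lambda>_. integer_mod_group 2)"
      using iso LE by simp
  qed
qed

end
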